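(* Let $\mathscr{P}=(P^j_{B_1'B_2'})_{j=1}^d$ be a projective measurement on finite-dimensional $\mathcal{H}_{B_1'}\otimes\mathcal{H}_{B_2'}$ and $\mathscr{F}=(F^j_{B_1B_2})_{j=1}^d$ a POVM on finite-dimensional $\mathcal{H}_{B_1}\otimes\mathcal{H}_{B_2}$. Then $Q(\mathscr{F},\mathscr{P})\le1$, and if $Q(\mathscr{F},\mathscr{P})=1$ then there exist completely positive unital maps $\Lambda_{B_1}:\mathcal{L}(\mathcal{H}_{B_1})\to\mathcal{L}(\mathcal{H}_{B_1'})$, $\Lambda_{B_2}:\mathcal{L}(\mathcal{H}_{B_2})\to\mathcal{L}(\mathcal{H}_{B_2'})$ such that $(\Lambda_{B_1}\otimes\Lambda_{B_2})(F^j_{B_1B_2})=P^j_{B_1'B_2'}$ for every $j$.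
   Context: $Q(\mathscr{F},\mathscr{P}):=\frac{1}{|B_1'||B_2'|}\max_{\Lambda_{B_1},\Lambda_{B_2}}\sum_{j=1}^d\operatorname{tr}\big[(\Lambda_{B_1}\otimes\Lambda_{B_2})(F^j_{B_1B_2})P^j_{B_1'B_2'}\big]$, maximized over completely positive unital maps $\Lambda_{B_i}:\mathcal{L}(\mathcal{H}_{B_i})\to\mathcal{L}(\mathcal{H}_{B_i'})$; $|X|$ is the dimension of $\mathcal{H}_X$. *)

theory Defs
  imports Complex_Main "Jordan_Normal_Form.Matrix"
begin

text \<open>Operators on finite-dimensional Hilbert spaces are represented by square complex
matrices (Jordan_Normal_Form); the Hilbert space H_X has dimension |X|, and the
tensor product of spaces of dimensions p and q is identified with dimension p*q via
the index map (a,c) maps to a*q+c (Kronecker convention).\<close>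

definition mtrace :: "complex mat \<Rightarrow> complex" where
  "mtrace A = (\<Sum>i<dim_row A. A $$ (i, i))"

definition adj :: "complex mat \<Rightarrow> complex mat" where
  "adj A = mat (dim_col A) (dim_row A) (\<lambda>(i, j). cnj (A $$ (j, i)))"

definition psd :: "nat \<Rightarrow> complex mat \<Rightarrow> bool" where
  "psd n A \<longleftrightarrow> A \<in> carrier_mat n n \<and> adj A = A \<and>
     (\<forall>v \<in> carrier_vec n. 0 \<le> Re ((A *\<^sub>v v) \<bullet>c v))"

definition kron :: "complex mat \<Rightarrow> complex mat \<Rightarrow> complex mat" where
  "kron A B = mat (dim_row A * dim_row B) (dim_col A * dim_col B)
     (\<lambda>(i, j). A $$ (i div dim_row B, j div dim_col B) * B $$ (i mod dim_row B, j mod dim_col B))"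

definition munit :: "nat \<Rightarrow> nat \<Rightarrow> nat \<Rightarrow> complex mat" where
  "munit n a b = mat n n (\<lambda>(i, j). if i = a \<and> j = b then 1 else 0)"

definition lin_map :: "nat \<Rightarrow> nat \<Rightarrow> (complex mat \<Rightarrow> complex mat) \<Rightarrow> bool" where
  "lin_map n m L \<longleftrightarrow>
     (\<forall>A \<in> carrier_mat n n. L A \<in> carrier_mat m m) \<and>
     (\<forall>A \<in> carrier_mat n n. \<forall>B \<in> carrier_mat n n. L (A + B) = L A + L B) \<and>
     (\<forall>c. \<forall>A \<in> carrier_mat n n. L (c \<cdot>\<^sub>m A) = c \<cdot>\<^sub>m L A)"

text \<open>(id_k \<otimes> L) applied to a k*n x k*n matrix viewed as a k x k block matrix
with n x n blocks.\<close>
definition block_apply :: "nat \<Rightarrow> nat \<Rightarrow> nat \<Rightarrow> (complex mat \<Rightarrow> complex mat) \<Rightarrow> complex mat \<Rightarrow> complex mat" where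
  "block_apply k n m L X = mat (k * m) (k * m)
     (\<lambda>(i, j). L (mat n n (\<lambda>(p, q). X $$ ((i div m) * n + p, (j div m) * n + q))) $$ (i mod m, j mod m))"

definition cp_map :: "nat \<Rightarrow> nat \<Rightarrow> (complex mat \<Rightarrow> complex mat) \<Rightarrow> bool" where
  "cp_map n m L \<longleftrightarrow> lin_map n m L \<and>
     (\<forall>k X. psd (k * n) X \<longrightarrow> psd (k * m) (block_apply k n m L X))"

definition cpu_map :: "nat \<Rightarrow> nat \<Rightarrow> (complex mat \<Rightarrow> complex mat) \<Rightarrow> bool" where
  "cpu_map n m L \<longleftrightarrow> cp_map n m L \<and> L (1\<^sub>m n) = 1\<^sub>m m"

text \<open>(L1 \<otimes> L2)(X) for X on C^(n1) \<otimes> C^(n2), defined by linear extension from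
matrix units: (L1 \<otimes> L2)(|a><b| \<otimes> |c><e|) = L1(|a><b|) \<otimes> L2(|c><e|).\<close>
definition tensor_map :: "nat \<Rightarrow> nat \<Rightarrow> nat \<Rightarrow> nat \<Rightarrow> (complex mat \<Rightarrow> complex mat) \<Rightarrow>
    (complex mat \<Rightarrow> complex mat) \<Rightarrow> complex mat \<Rightarrow> complex mat" where
  "tensor_map n1 n2 m1 m2 L1 L2 X = mat (m1 * m2) (m1 * m2) (\<lambda>(i, j).
     \<Sum>a<n1. \<Sum>b<n1. \<Sum>c<n2. \<Sum>e<n2.
       X $$ (a * n2 + c, b * n2 + e) * kron (L1 (munit n1 a b)) (L2 (munit n2 c e)) $$ (i, j))"

definition msum :: "nat \<Rightarrow> nat \<Rightarrow> (nat \<Rightarrow> complex mat) \<Rightarrow> complex mat" where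
  "msum N d F = mat N N (\<lambda>(i, j). \<Sum>k<d. F k $$ (i, j))"

definition povm :: "nat \<Rightarrow> nat \<Rightarrow> (nat \<Rightarrow> complex mat) \<Rightarrow> bool" where
  "povm N d F \<longleftrightarrow> (\<forall>j<d. psd N (F j)) \<and> msum N d F = 1\<^sub>m N"

definition projective_measurement :: "nat \<Rightarrow> nat \<Rightarrow> (nat \<Rightarrow> complex mat) \<Rightarrow> bool" where
  "projective_measurement N d P \<longleftrightarrow> povm N d P \<and> (\<forall>j<d. P j * P j = P j)"

text \<open>Q(F,P); the max over CPU maps is written as a supremum.\<close>
definition Qval :: "nat \<Rightarrow> nat \<Rightarrow> nat \<Rightarrow> nat \<Rightarrow> nat \<Rightarrow> (nat \<Rightarrow> complex mat) \<Rightarrow> (nat \<Rightarrow> complex mat) \<Rightarrow> real" where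
  "Qval n1 n2 m1 m2 d F P = (1 / (real m1 * real m2)) *
     Sup {Re (\<Sum>j<d. mtrace (tensor_map n1 n2 m1 m2 L1 L2 (F j) * P j)) | L1 L2.
            cpu_map n1 m1 L1 \<and> cpu_map n2 m2 L2}"

end

theory Submission
  imports Defs
begin


definition qf :: "nat \<Rightarrow> complex mat \<Rightarrow> (nat \<Rightarrow> complex) \<Rightarrow> complex" where
  "qf N A x = (\<Sum>i<N. \<Sum>k<N. A $$ (i,k) * x k * cnj (x i))"

lemma qf_vec:
  assumes "A \<in> carrier_mat N N" "v \<in> carrier_vec N"
  shows "(A *\<^sub>v v) \<bullet>c v = qf N A (\<lambda>i. v $ i)"
  using assms
  by (simp add: qf_def scalar_prod_def lessThan_atLeast0 row_def sum_distrib_right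
      conjugate_complex_def)

lemma qf_cong: "(\<And>i. i < N \<Longrightarrow> x i = y i) \<Longrightarrow> qf N A x = qf N A y"
  unfolding qf_def by (intro sum.cong refl) auto

lemma psd_iff:
  "psd N A \<longleftrightarrow> A \<in> carrier_mat N N \<and> adj A = A \<and> (\<forall>x. 0 \<le> Re (qf N A x))"
proof
  assume h: "psd N A"
  show "A \<in> carrier_mat N N \<and> adj A = A \<and> (\<forall>x. 0 \<le> Re (qf N A x))"
  proof (intro conjI allI)
    fix x
    have "0 \<le> Re ((A *\<^sub>v vec N x) \<bullet>c vec N x)" using h unfolding psd_def by auto
    also have "(A *\<^sub>v vec N x) \<bullet>c vec N x = qf N A x"
      using h unfolding psd_def by (subst qf_vec[of A N]) (auto intro: qf_cong)
    finally show "0 \<le> Re (qf N A x)" .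
  qed (use h in \<open>auto simp: psd_def\<close>)
next
  assume h: "A \<in> carrier_mat N N \<and> adj A = A \<and> (\<forall>x. 0 \<le> Re (qf N A x))"
  then show "psd N A" unfolding psd_def by (auto simp: qf_vec)
qed

lemma herm_iff:
  assumes "A \<in> carrier_mat N N"
  shows "adj A = A \<longleftrightarrow> (\<forall>i<N. \<forall>j<N. cnj (A $$ (j,i)) = A $$ (i,j))"
proof
  assume "adj A = A"
  then show "\<forall>i<N. \<forall>j<N. cnj (A $$ (j,i)) = A $$ (i,j)"
    using assms unfolding adj_def by (metis (no_types, lifting) carrier_matD index_mat(1) old.prod.case)
next
  assume "\<forall>i<N. \<forall>j<N. cnj (A $$ (j,i)) = A $$ (i,j)"
  then show "adj A = A" using assms unfolding adj_def by (auto intro!: eq_matI)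
qed

lemma psd_herm: "psd N A \<Longrightarrow> i < N \<Longrightarrow> j < N \<Longrightarrow> A $$ (j,i) = cnj (A $$ (i,j))"
  unfolding psd_iff using herm_iff by (metis complex_cnj_cnj)

lemma psd_carrier: "psd N A \<Longrightarrow> A \<in> carrier_mat N N"
  unfolding psd_def by auto

lemma psd_qf: "psd N A \<Longrightarrow> 0 \<le> Re (qf N A x)"
  unfolding psd_iff by auto

lemma psd_perm:
  assumes "psd N A" "bij_betw \<pi> {..<N} {..<N}"
  shows "psd N (mat N N (\<lambda>(i,j). A $$ (\<pi> i, \<pi> j)))"
  unfolding psd_iff
proof (intro conjI allI)
  let ?B = "mat N N (\<lambda>(i,j). A $$ (\<pi> i, \<pi> j))"
  show "?B \<in> carrier_mat N N" by simp
  have pin: "\<And>i. i < N \<Longrightarrow> \<pi> i < N" using assms(2) by (auto dest: bij_betw_apply)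
  show "adj ?B = ?B"
    unfolding herm_iff[OF mat_carrier]
  proof (intro allI impI)
    fix i j assume "i < N" "j < N"
    then show "cnj (?B $$ (j, i)) = ?B $$ (i, j)"
      using pin psd_herm[OF assms(1), of "\<pi> i" "\<pi> j"] by simp
  qed
  fix x :: "nat \<Rightarrow> complex"
  define \<sigma> where "\<sigma> = inv_into {..<N} \<pi>"
  define y where "y = x \<circ> \<sigma>"
  have xy: "\<And>k. k < N \<Longrightarrow> x k = y (\<pi> k)"
    unfolding y_def \<sigma>_def using assms(2) by (simp add: bij_betw_inv_into_left)
  have "qf N ?B x = (\<Sum>i<N. \<Sum>k<N. A $$ (\<pi> i, \<pi> k) * y (\<pi> k) * cnj (y (\<pi> i)))"
    unfolding qf_def by (intro sum.cong refl) (simp add: xy)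
  also have "\<dots> = (\<Sum>i<N. \<Sum>k<N. A $$ (\<pi> i, k) * y k * cnj (y (\<pi> i)))"
  proof (rule sum.cong[OF refl])
    fix i assume "i \<in> {..<N}"
    show "(\<Sum>k<N. A $$ (\<pi> i, \<pi> k) * y (\<pi> k) * cnj (y (\<pi> i))) = (\<Sum>k<N. A $$ (\<pi> i, k) * y k * cnj (y (\<pi> i)))"
      using sum.reindex_bij_betw[OF assms(2), of "\<lambda>k. A $$ (\<pi> i, k) * y k * cnj (y (\<pi> i))"] by simp
  qed
  also have "\<dots> = qf N A y"
    unfolding qf_def by (rule sum.reindex_bij_betw[OF assms(2), where g = "\<lambda>i. \<Sum>k<N. A $$ (i, k) * y k * cnj (y i)"])
  finally show "0 \<le> Re (qf N ?B x)" using psd_qf[OF assms(1)] by simp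
qed

lemma qf_expand:
  "qf N A (\<lambda>k. x k + c * w k) = qf N A x + cnj c * (\<Sum>i<N. \<Sum>k<N. A $$ (i,k) * x k * cnj (w i))
     + c * (\<Sum>i<N. \<Sum>k<N. A $$ (i,k) * w k * cnj (x i)) + c * cnj c * qf N A w"
  unfolding qf_def
  by (simp add: algebra_simps sum.distrib sum_distrib_left)

lemma sum_delta_r:
  "p < (N::nat) \<Longrightarrow> (\<Sum>k<N. f k * (if k = p then a else 0)) = f p * (a::complex)"
  by (simp add: if_distrib[where f="\<lambda>z. _ * z"] cong: if_cong)

lemma sum_delta_l:
  "p < (N::nat) \<Longrightarrow> (\<Sum>k<N. (if k = p then a else 0) * f k) = (a::complex) * f p"
  by (simp add: if_distrib[where f="\<lambda>z. z * _"] cong: if_cong)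

lemma qf_delta:
  assumes "p < N"
  shows "qf N A (\<lambda>k. if k = p then a else 0) = a * cnj a * A $$ (p,p)"
proof -
  have "qf N A (\<lambda>k. if k = p then a else 0) =
     (\<Sum>i<N. (if i = p then cnj a else 0) * (\<Sum>k<N. A $$ (i, k) * (if k = p then a else 0)))"
    unfolding qf_def by (intro sum.cong refl) (auto simp: sum_distrib_left algebra_simps)
  also have "\<dots> = cnj a * (A $$ (p,p) * a)" using assms by (simp add: sum_delta_r sum_delta_l)
  finally show ?thesis by (simp add: algebra_simps)
qed



lemma sum_delta_l2:
  "p < (N::nat) \<Longrightarrow> (\<Sum>k<N. (if p = k then a else 0) * f k) = (a::complex) * f p"
  by (simp add: if_distrib[where f="\<lambda>z. z * _"] cong: if_cong)

lemma sum_delta_r2: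
  "p < (N::nat) \<Longrightarrow> (\<Sum>k<N. f k * (if p = k then a else 0)) = f p * (a::complex)"
  by (simp add: if_distrib[where f="\<lambda>z. _ * z"] cong: if_cong)

lemma dd:
  assumes "p < N" "q < N"
  shows "(\<Sum>i<N. \<Sum>k<N. A $$ (i,k) * (if k = p then a else 0) * cnj (if i = q then b else 0))
     = cnj b * A $$ (q,p) * a"
proof -
  have "(\<Sum>i<N. \<Sum>k<N. A $$ (i,k) * (if k = p then a else 0) * cnj (if i = q then b else 0))
     = (\<Sum>i<N. (if i = q then cnj b else 0) * (\<Sum>k<N. A $$ (i,k) * (if k = p then a else 0)))"
  proof (rule sum.cong[OF refl])
    fix i
    show "(\<Sum>k<N. A $$ (i,k) * (if k = p then a else 0) * cnj (if i = q then b else 0)) =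
      (if i = q then cnj b else 0) * (\<Sum>k<N. A $$ (i,k) * (if k = p then a else 0))"
      by (cases "i = q") (auto simp: sum_distrib_left algebra_simps)
  qed
  also have "\<dots> = cnj b * (A $$ (q,p) * a)" using assms by (simp add: sum_delta_l sum_delta_r)
  finally show ?thesis by (simp add: algebra_simps)
qed

lemma qf_two:
  assumes "p < N" "q < N"
  shows "qf N A (\<lambda>k. (if k = p then 1 else 0) + u * (if k = q then 1 else 0)) =
    A $$ (p,p) + cnj u * A $$ (q,p) + u * A $$ (p,q) + u * cnj u * A $$ (q,q)"
  using assms by (simp add: qf_expand qf_delta dd)

lemma psd_diag_nonneg: "psd N A \<Longrightarrow> p < N \<Longrightarrow> 0 \<le> Re (A $$ (p,p))"
  using psd_qf[of N A "\<lambda>k. if k = p then 1 else 0"] qf_delta[of p N A 1] by simp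

lemma psd_entry_bound:
  assumes A: "psd N A" and pq: "p < N" "q < N"
  shows "cmod (A $$ (p,q)) \<le> Re (A $$ (p,p)) + Re (A $$ (q,q))"
proof -
  define z where "z = A $$ (p,q)"
  define s where "s = Re (A $$ (p,p)) + Re (A $$ (q,q))"
  have hz: "A $$ (q,p) = cnj z" unfolding z_def using psd_herm[OF A pq] .
  have key: "0 \<le> s + 2 * Re (u * z)" if u: "u * cnj u = 1" for u
  proof -
    have "0 \<le> Re (qf N A (\<lambda>k. (if k = p then 1 else 0) + u * (if k = q then 1 else 0)))"
      by (rule psd_qf[OF A])
    also have "\<dots> = Re (A $$ (p,p) + cnj (u * z) + u * z + A $$ (q,q))"
      unfolding qf_two[OF pq] hz u by (simp add: z_def)
    also have "\<dots> = s + 2 * Re (u * z)" unfolding s_def by simp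
    finally show ?thesis .
  qed
  have k1: "0 \<le> s + 2 * Re z" using key[of 1] by simp
  have k2: "0 \<le> s - 2 * Re z" using key[of "-1"] by simp
  have k3: "0 \<le> s - 2 * Im z" using key[of "\<i>"] by simp
  have k4: "0 \<le> s + 2 * Im z" using key[of "-\<i>"] by simp
  have "cmod z \<le> \<bar>Re z\<bar> + \<bar>Im z\<bar>" by (rule cmod_le)
  also have "\<dots> \<le> s" using k1 k2 k3 k4 by linarith
  finally show ?thesis unfolding z_def s_def .
qed

lemma psd_kernel:
  assumes A: "psd N A" and z: "Re (qf N A x) = 0" and i: "i < N"
  shows "(\<Sum>k<N. A $$ (i,k) * x k) = 0"
proof -
  define w where "w i = (\<Sum>k<N. A $$ (i,k) * x k)" for i
  define s where "s = (\<Sum>i<N. w i * cnj (w i))"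
  have B1: "(\<Sum>i<N. \<Sum>k<N. A $$ (i,k) * x k * cnj (w i)) = s"
    unfolding s_def
  proof (rule sum.cong[OF refl])
    fix i
    have "(\<Sum>k<N. A $$ (i,k) * x k * cnj (w i)) = (\<Sum>k<N. A $$ (i,k) * x k) * cnj (w i)"
      by (rule sum_distrib_right[symmetric])
    then show "(\<Sum>k<N. A $$ (i,k) * x k * cnj (w i)) = w i * cnj (w i)" by (simp only: w_def)
  qed
  have "(\<Sum>i<N. \<Sum>k<N. A $$ (i,k) * w k * cnj (x i)) = (\<Sum>k<N. \<Sum>i<N. A $$ (i,k) * w k * cnj (x i))"
    by (rule sum.swap)
  also have "\<dots> = (\<Sum>k<N. w k * cnj (w k))"
  proof (rule sum.cong[OF refl])
    fix k assume k: "k \<in> {..<N}"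
    have "cnj (w k) = (\<Sum>i<N. cnj (A $$ (k,i)) * cnj (x i))" unfolding w_def by simp
    also have "\<dots> = (\<Sum>i<N. A $$ (i,k) * cnj (x i))"
    proof (rule sum.cong[OF refl])
      fix i assume "i \<in> {..<N}"
      then show "cnj (A $$ (k,i)) * cnj (x i) = A $$ (i,k) * cnj (x i)"
        using psd_herm[OF A, of k i] k by simp
    qed
    finally have cw: "cnj (w k) = (\<Sum>i<N. A $$ (i,k) * cnj (x i))" .
    have "(\<Sum>i<N. A $$ (i,k) * w k * cnj (x i)) = w k * (\<Sum>i<N. A $$ (i,k) * cnj (x i))"
      by (simp add: sum_distrib_left mult_ac)
    then show "(\<Sum>i<N. A $$ (i,k) * w k * cnj (x i)) = w k * cnj (w k)"
      by (simp only: cw)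
  qed
  finally have B2: "(\<Sum>i<N. \<Sum>k<N. A $$ (i,k) * w k * cnj (x i)) = s" unfolding s_def .
  define \<sigma> where "\<sigma> = (\<Sum>i<N. (cmod (w i))^2)"
  have sig: "Re s = \<sigma>" unfolding s_def \<sigma>_def by (simp add: complex_norm_square[symmetric] del: of_real_power)
  have sig0: "0 \<le> \<sigma>" unfolding \<sigma>_def by (simp add: sum_nonneg)
  define \<gamma> where "\<gamma> = Re (qf N A w)"
  have g0: "0 \<le> \<gamma>" unfolding \<gamma>_def by (rule psd_qf[OF A])
  have ineq: "0 \<le> - 2 * t * \<sigma> + t * t * \<gamma>" for t :: real
  proof -
    have "0 \<le> Re (qf N A (\<lambda>k. x k + complex_of_real (-t) * w k))" by (rule psd_qf[OF A])
    also have "\<dots> = Re (qf N A x + cnj (complex_of_real (-t)) * s + complex_of_real (-t) * s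
        + complex_of_real (-t) * cnj (complex_of_real (-t)) * qf N A w)"
      by (simp only: qf_expand B1 B2)
    also have "\<dots> = Re (qf N A x) - t * Re s - t * Re s + t * t * Re (qf N A w)"
      by simp
    also have "\<dots> = - 2 * t * \<sigma> + t * t * \<gamma>"
      using z sig by (simp add: \<gamma>_def)
    finally show ?thesis .
  qed
  have "\<sigma> = 0"
  proof (rule ccontr)
    assume "\<sigma> \<noteq> 0"
    then have sp: "\<sigma> > 0" using sig0 by simp
    define t where "t = \<sigma> / (\<gamma> + 1)"
    have tp: "t > 0" unfolding t_def using sp g0 by simp
    have "\<gamma> / (\<gamma> + 1) \<le> 1" using g0 by simp
    then have "\<sigma> * (\<gamma> / (\<gamma> + 1)) \<le> \<sigma> * 1" using sp by (intro mult_left_mono) auto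
    then have a1: "t * \<gamma> \<le> \<sigma>" unfolding t_def by simp
    have "0 \<le> t * (- 2 * \<sigma> + t * \<gamma>)" using ineq[of t] by (simp add: algebra_simps)
    then have "0 \<le> - 2 * \<sigma> + t * \<gamma>" using tp by (simp add: zero_le_mult_iff)
    then show False using a1 sp by linarith
  qed
  then have "\<forall>i\<in>{..<N}. (cmod (w i))^2 = 0"
    unfolding \<sigma>_def by (subst sum_nonneg_eq_0_iff[symmetric]) auto
  then show ?thesis using i unfolding w_def by simp
qed

lemma trace_qf:
  assumes A: "A \<in> carrier_mat N N" and Q: "Q \<in> carrier_mat N N" "adj Q = Q" "Q * Q = Q"
  shows "mtrace (A * Q) = (\<Sum>l<N. qf N A (\<lambda>k. Q $$ (k,l)))"
proof -
  have hQ: "\<And>i j. i < N \<Longrightarrow> j < N \<Longrightarrow> Q $$ (j,i) = cnj (Q $$ (i,j))"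
    using Q(2) unfolding herm_iff[OF Q(1)] by (metis complex_cnj_cnj)
  have Qk: "Q $$ (k,i) = (\<Sum>l<N. Q $$ (k,l) * cnj (Q $$ (i,l)))" if "k < N" "i < N" for k i
  proof -
    have "Q $$ (k,i) = (Q * Q) $$ (k,i)" using Q(3) by simp
    also have "\<dots> = (\<Sum>l<N. Q $$ (k,l) * Q $$ (l,i))"
      using Q(1) that by (simp add: scalar_prod_def lessThan_atLeast0)
    also have "\<dots> = (\<Sum>l<N. Q $$ (k,l) * cnj (Q $$ (i,l)))"
    proof (rule sum.cong[OF refl])
      fix l assume "l \<in> {..<N}"
      then show "Q $$ (k,l) * Q $$ (l,i) = Q $$ (k,l) * cnj (Q $$ (i,l))"
        using hQ[of i l] that by simp
    qed
    finally show ?thesis .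
  qed
  have "mtrace (A * Q) = (\<Sum>i<N. \<Sum>k<N. A $$ (i,k) * Q $$ (k,i))"
    unfolding mtrace_def using A Q(1) by (simp add: scalar_prod_def lessThan_atLeast0)
  also have "\<dots> = (\<Sum>i<N. \<Sum>k<N. \<Sum>l<N. A $$ (i,k) * Q $$ (k,l) * cnj (Q $$ (i,l)))"
  proof (rule sum.cong[OF refl], rule sum.cong[OF refl])
    fix i k assume "i \<in> {..<N}" "k \<in> {..<N}"
    then have ik: "i < N" "k < N" by auto
    show "A $$ (i,k) * Q $$ (k,i) = (\<Sum>l<N. A $$ (i,k) * Q $$ (k,l) * cnj (Q $$ (i,l)))"
      by (subst Qk[OF ik(2) ik(1)]) (simp add: sum_distrib_left mult.assoc)
  qed
  also have "\<dots> = (\<Sum>i<N. \<Sum>l<N. \<Sum>k<N. A $$ (i,k) * Q $$ (k,l) * cnj (Q $$ (i,l)))"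
    by (rule sum.cong[OF refl]) (rule sum.swap)
  also have "\<dots> = (\<Sum>l<N. \<Sum>i<N. \<Sum>k<N. A $$ (i,k) * Q $$ (k,l) * cnj (Q $$ (i,l)))"
    by (rule sum.swap)
  also have "\<dots> = (\<Sum>l<N. qf N A (\<lambda>k. Q $$ (k,l)))" unfolding qf_def by simp
  finally show ?thesis .
qed

lemma trace_nonneg:
  assumes A: "psd N A" and Q: "Q \<in> carrier_mat N N" "adj Q = Q" "Q * Q = Q"
  shows "0 \<le> Re (mtrace (A * Q))"
  unfolding trace_qf[OF psd_carrier[OF A] Q] by (simp add: sum_nonneg psd_qf[OF A])

lemma trace_zero:
  assumes A: "psd N A" and Q: "Q \<in> carrier_mat N N" "adj Q = Q" "Q * Q = Q"
    and z: "Re (mtrace (A * Q)) = 0"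
  shows "A * Q = 0\<^sub>m N N"
proof -
  have "(\<Sum>l<N. Re (qf N A (\<lambda>k. Q $$ (k,l)))) = 0"
    using z unfolding trace_qf[OF psd_carrier[OF A] Q] by simp
  then have z2: "\<forall>l\<in>{..<N}. Re (qf N A (\<lambda>k. Q $$ (k,l))) = 0"
    by (subst sum_nonneg_eq_0_iff[symmetric]) (auto simp: psd_qf[OF A])
  show ?thesis
  proof (rule eq_matI)
    fix i l assume "i < dim_row (0\<^sub>m N N :: complex mat)" "l < dim_col (0\<^sub>m N N :: complex mat)"
    then have il: "i < N" "l < N" by auto
    have "(A * Q) $$ (i,l) = (\<Sum>k<N. A $$ (i,k) * Q $$ (k,l))"
      using il psd_carrier[OF A] Q(1) by (simp add: scalar_prod_def lessThan_atLeast0)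
    also have "\<dots> = 0" using psd_kernel[OF A z2[rule_format] il(1)] il by simp
    finally show "(A * Q) $$ (i,l) = 0\<^sub>m N N $$ (i,l)" using il by simp
  qed (use psd_carrier[OF A] Q(1) in auto)
qed



lemma munit_carrier[simp]: "munit n a b \<in> carrier_mat n n"
  unfolding munit_def by simp

lemma munit_index[simp]: "p < n \<Longrightarrow> q < n \<Longrightarrow> munit n a b $$ (p,q) = (if p = a \<and> q = b then 1 else 0)"
  unfolding munit_def by simp

lemma munit_dim[simp]: "dim_row (munit n a b) = n" "dim_col (munit n a b) = n"
  unfolding munit_def by simp_all

lemma lin_carrier: "lin_map n m L \<Longrightarrow> A \<in> carrier_mat n n \<Longrightarrow> L A \<in> carrier_mat m m"
  unfolding lin_map_def by auto

lemma lin_zero: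
  assumes "lin_map n m L"
  shows "L (0\<^sub>m n n) = 0\<^sub>m m m"
proof -
  have "0\<^sub>m n n = (0::complex) \<cdot>\<^sub>m 0\<^sub>m n n" by (rule eq_matI) auto
  then have "L (0\<^sub>m n n) = (0::complex) \<cdot>\<^sub>m L (0\<^sub>m n n)"
    using assms unfolding lin_map_def by (metis zero_carrier_mat)
  also have "\<dots> = 0\<^sub>m m m"
    using lin_carrier[OF assms zero_carrier_mat] by (intro eq_matI) auto
  finally show ?thesis .
qed

definition partmat :: "nat \<Rightarrow> complex mat \<Rightarrow> (nat \<times> nat) set \<Rightarrow> complex mat" where
  "partmat n A S = mat n n (\<lambda>(a,b). if (a,b) \<in> S then A $$ (a,b) else 0)"

lemma lin_partmat:
  assumes L: "lin_map n m L" and S: "finite S" "S \<subseteq> {..<n} \<times> {..<n}" and ij: "i < m" "j < m"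
  shows "L (partmat n A S) $$ (i,j) = (\<Sum>(a,b)\<in>S. A $$ (a,b) * L (munit n a b) $$ (i,j))"
  using S
proof (induction S rule: finite_induct)
  case empty
  have "partmat n A {} = 0\<^sub>m n n" unfolding partmat_def by (rule eq_matI) auto
  then show ?case using lin_zero[OF L] ij by simp
next
  case (insert p S)
  obtain a b where p: "p = (a,b)" by force
  have ab: "a < n" "b < n" using insert.prems p by auto
  have eq: "partmat n A (insert p S) = partmat n A S + A $$ (a,b) \<cdot>\<^sub>m munit n a b"
    unfolding partmat_def p by (rule eq_matI) (use insert.hyps p in auto)
  have c1: "partmat n A S \<in> carrier_mat n n" unfolding partmat_def by simp
  have c2: "A $$ (a,b) \<cdot>\<^sub>m munit n a b \<in> carrier_mat n n" by simp
  have "L (partmat n A (insert p S)) = L (partmat n A S) + A $$ (a,b) \<cdot>\<^sub>m L (munit n a b)"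
    unfolding eq using L c1 c2 unfolding lin_map_def by (metis munit_carrier)
  then have "L (partmat n A (insert p S)) $$ (i,j) = L (partmat n A S) $$ (i,j) + A $$ (a,b) * L (munit n a b) $$ (i,j)"
    using lin_carrier[OF L c1] lin_carrier[OF L munit_carrier[of n a b]] ij by simp
  also have "\<dots> = (\<Sum>(a,b)\<in>insert p S. A $$ (a,b) * L (munit n a b) $$ (i,j))"
    using insert.IH insert.prems insert.hyps p by simp
  finally show ?case .
qed

lemma lin_rep:
  assumes L: "lin_map n m L" and A: "A \<in> carrier_mat n n" and ij: "i < m" "j < m"
  shows "L A $$ (i,j) = (\<Sum>a<n. \<Sum>b<n. A $$ (a,b) * L (munit n a b) $$ (i,j))"
proof -
  have "partmat n A ({..<n} \<times> {..<n}) = A" unfolding partmat_def using A by (intro eq_matI) auto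
  then have "L A $$ (i,j) = (\<Sum>(a,b)\<in>{..<n} \<times> {..<n}. A $$ (a,b) * L (munit n a b) $$ (i,j))"
    using lin_partmat[OF L _ _ ij, of "{..<n} \<times> {..<n}" A] by simp
  also have "\<dots> = (\<Sum>a<n. \<Sum>b<n. A $$ (a,b) * L (munit n a b) $$ (i,j))"
    by (rule sum.cartesian_product[symmetric])
  finally show ?thesis .
qed

lemma lin_one:
  assumes L: "lin_map n m L" and ij: "i < m" "j < m"
  shows "L (1\<^sub>m n) $$ (i,j) = (\<Sum>a<n. L (munit n a a) $$ (i,j))"
  unfolding lin_rep[OF L one_carrier_mat ij]
  by (rule sum.cong[OF refl]) (simp add: sum_delta_l2)

lemma kron_index:
  "x < dim_row A * dim_row B \<Longrightarrow> y < dim_col A * dim_col B \<Longrightarrow>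
   kron A B $$ (x,y) = A $$ (x div dim_row B, y div dim_col B) * B $$ (x mod dim_row B, y mod dim_col B)"
  unfolding kron_def by simp

lemma tm_entry:
  assumes L1: "lin_map n1 m1 L1" and L2: "lin_map n2 m2 L2" and xy: "x < m1 * m2" "y < m1 * m2"
  shows "tensor_map n1 n2 m1 m2 L1 L2 X $$ (x,y) =
    (\<Sum>a<n1. \<Sum>b<n1. \<Sum>c<n2. \<Sum>e<n2. X $$ (a * n2 + c, b * n2 + e) *
       (L1 (munit n1 a b) $$ (x div m2, y div m2) * L2 (munit n2 c e) $$ (x mod m2, y mod m2)))"
proof -
  have c1: "\<And>a b. L1 (munit n1 a b) \<in> carrier_mat m1 m1" using lin_carrier[OF L1] by simp
  have c2: "\<And>a b. L2 (munit n2 a b) \<in> carrier_mat m2 m2" using lin_carrier[OF L2] by simp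
  have dr: "dim_row (L1 (munit n1 a b)) = m1" "dim_col (L1 (munit n1 a b)) = m1"
    "dim_row (L2 (munit n2 a b)) = m2" "dim_col (L2 (munit n2 a b)) = m2" for a b
    using c1[of a b] c2[of a b] by auto
  have k: "\<And>a b c e. kron (L1 (munit n1 a b)) (L2 (munit n2 c e)) $$ (x,y) =
      L1 (munit n1 a b) $$ (x div m2, y div m2) * L2 (munit n2 c e) $$ (x mod m2, y mod m2)"
    using xy by (simp add: kron_index dr)
  have "tensor_map n1 n2 m1 m2 L1 L2 X $$ (x,y) = (\<Sum>a<n1. \<Sum>b<n1. \<Sum>c<n2. \<Sum>e<n2.
       X $$ (a * n2 + c, b * n2 + e) * kron (L1 (munit n1 a b)) (L2 (munit n2 c e)) $$ (x, y))"
    unfolding tensor_map_def using xy by simp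
  then show ?thesis by (simp only: k)
qed

lemma tm_carrier: "tensor_map n1 n2 m1 m2 L1 L2 X \<in> carrier_mat (m1*m2) (m1*m2)"
  unfolding tensor_map_def by simp

lemma idx_lt: "a < n1 \<Longrightarrow> c < n2 \<Longrightarrow> a * n2 + c < n1 * (n2::nat)"
proof -
  assume "a < n1" "c < n2"
  then have "a * n2 + c < a * n2 + n2" by simp
  also have "\<dots> = (a + 1) * n2" by simp
  also have "\<dots> \<le> n1 * n2" using \<open>a < n1\<close> by (intro mult_right_mono) auto
  finally show ?thesis .
qed

lemma idx_eq: "c < n2 \<Longrightarrow> e < n2 \<Longrightarrow> (a * n2 + c = b * n2 + e) \<longleftrightarrow> (a = b \<and> c = (e::nat))"
proof
  assume h: "c < n2" "e < n2" "a * n2 + c = b * n2 + e"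
  then have "(a * n2 + c) div n2 = (b * n2 + e) div n2" "(a * n2 + c) mod n2 = (b * n2 + e) mod n2" by simp_all
  then show "a = b \<and> c = e" using h(1,2) by simp
qed simp

lemma msum_index: "i < N \<Longrightarrow> j < N \<Longrightarrow> msum N d F $$ (i,j) = (\<Sum>k<d. F k $$ (i,j))"
  unfolding msum_def by simp

lemma sum5_swap: "(\<Sum>a<n1. \<Sum>b<n1. \<Sum>c<n2. \<Sum>e<n2. \<Sum>j<d. g j a b c e) =
   (\<Sum>j<(d::nat). \<Sum>a<(n1::nat). \<Sum>b<n1. \<Sum>c<(n2::nat). \<Sum>e<n2. (g j a b c e :: complex))"
proof -
  have "(\<Sum>a<n1. \<Sum>b<n1. \<Sum>c<n2. \<Sum>e<n2. \<Sum>j<d. g j a b c e) =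
        (\<Sum>a<n1. \<Sum>b<n1. \<Sum>c<n2. \<Sum>j<d. \<Sum>e<n2. g j a b c e)"
    by (intro sum.cong refl sum.swap)
  also have "\<dots> = (\<Sum>a<n1. \<Sum>b<n1. \<Sum>j<d. \<Sum>c<n2. \<Sum>e<n2. g j a b c e)"
    by (intro sum.cong refl sum.swap)
  also have "\<dots> = (\<Sum>a<n1. \<Sum>j<d. \<Sum>b<n1. \<Sum>c<n2. \<Sum>e<n2. g j a b c e)"
    by (intro sum.cong refl sum.swap)
  also have "\<dots> = (\<Sum>j<d. \<Sum>a<n1. \<Sum>b<n1. \<Sum>c<n2. \<Sum>e<n2. g j a b c e)"
    by (rule sum.swap)
  finally show ?thesis .
qed

lemma tm_msum:
  assumes L1: "lin_map n1 m1 L1" and L2: "lin_map n2 m2 L2" and xy: "x < m1 * m2" "y < m1 * m2"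
  shows "tensor_map n1 n2 m1 m2 L1 L2 (msum (n1*n2) d F) $$ (x,y) =
    (\<Sum>j<d. tensor_map n1 n2 m1 m2 L1 L2 (F j) $$ (x,y))"
proof -
  have "tensor_map n1 n2 m1 m2 L1 L2 (msum (n1*n2) d F) $$ (x,y) =
    (\<Sum>a<n1. \<Sum>b<n1. \<Sum>c<n2. \<Sum>e<n2. \<Sum>j<d. F j $$ (a * n2 + c, b * n2 + e) *
       (L1 (munit n1 a b) $$ (x div m2, y div m2) * L2 (munit n2 c e) $$ (x mod m2, y mod m2)))"
    unfolding tm_entry[OF L1 L2 xy]
  proof (intro sum.cong refl)
    fix a b c e assume h: "a \<in> {..<n1}" "b \<in> {..<n1}" "c \<in> {..<n2}" "e \<in> {..<n2}"
    have i1: "a * n2 + c < n1 * n2" "b * n2 + e < n1 * n2" using h idx_lt by auto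
    show "msum (n1 * n2) d F $$ (a * n2 + c, b * n2 + e) *
          (L1 (munit n1 a b) $$ (x div m2, y div m2) * L2 (munit n2 c e) $$ (x mod m2, y mod m2)) =
         (\<Sum>j<d. F j $$ (a * n2 + c, b * n2 + e) *
          (L1 (munit n1 a b) $$ (x div m2, y div m2) * L2 (munit n2 c e) $$ (x mod m2, y mod m2)))"
      unfolding msum_index[OF i1] by (rule sum_distrib_right)
  qed
  also have "\<dots> = (\<Sum>j<d. \<Sum>a<n1. \<Sum>b<n1. \<Sum>c<n2. \<Sum>e<n2. F j $$ (a * n2 + c, b * n2 + e) *
       (L1 (munit n1 a b) $$ (x div m2, y div m2) * L2 (munit n2 c e) $$ (x mod m2, y mod m2)))"
    by (rule sum5_swap[where g = "\<lambda>j a b c e. F j $$ (a * n2 + c, b * n2 + e) *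
       (L1 (munit n1 a b) $$ (x div m2, y div m2) * L2 (munit n2 c e) $$ (x mod m2, y mod m2))"])
  also have "\<dots> = (\<Sum>j<d. tensor_map n1 n2 m1 m2 L1 L2 (F j) $$ (x,y))"
    by (simp only: tm_entry[OF L1 L2 xy])
  finally show ?thesis .
qed

lemma tm_one:
  assumes L1: "cpu_map n1 m1 L1" and L2: "cpu_map n2 m2 L2"
  shows "tensor_map n1 n2 m1 m2 L1 L2 (1\<^sub>m (n1*n2)) = 1\<^sub>m (m1*m2)"
proof (rule eq_matI)
  have l1: "lin_map n1 m1 L1" and l2: "lin_map n2 m2 L2"
    using L1 L2 unfolding cpu_map_def cp_map_def by auto
  have u1: "L1 (1\<^sub>m n1) = 1\<^sub>m m1" and u2: "L2 (1\<^sub>m n2) = 1\<^sub>m m2"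
    using L1 L2 unfolding cpu_map_def by auto
  fix x y assume "x < dim_row (1\<^sub>m (m1*m2) :: complex mat)" "y < dim_col (1\<^sub>m (m1*m2) :: complex mat)"
  then have xy: "x < m1 * m2" "y < m1 * m2" by auto
  have m2: "0 < m2" using xy by (cases m2) auto
  have d1: "x div m2 < m1" "y div m2 < m1" using xy by (simp_all add: less_mult_imp_div_less)
  have d2: "x mod m2 < m2" "y mod m2 < m2" using m2 by simp_all
  let ?K1 = "\<lambda>a b. L1 (munit n1 a b) $$ (x div m2, y div m2)"
  let ?K2 = "\<lambda>c e. L2 (munit n2 c e) $$ (x mod m2, y mod m2)"
  have "tensor_map n1 n2 m1 m2 L1 L2 (1\<^sub>m (n1*n2)) $$ (x,y) =
     (\<Sum>a<n1. \<Sum>b<n1. \<Sum>c<n2. \<Sum>e<n2. (if a = b \<and> c = e then 1 else 0) * (?K1 a b * ?K2 c e))"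
    unfolding tm_entry[OF l1 l2 xy]
    by (intro sum.cong refl) (simp add: idx_lt idx_eq)
  also have "\<dots> = (\<Sum>a<n1. \<Sum>c<n2. ?K1 a a * ?K2 c c)"
  proof (rule sum.cong[OF refl])
    fix a assume a: "a \<in> {..<n1}"
    have "(\<Sum>b<n1. \<Sum>c<n2. \<Sum>e<n2. (if a = b \<and> c = e then 1 else 0) * (?K1 a b * ?K2 c e)) =
          (\<Sum>b<n1. (if b = a then 1 else 0) * (\<Sum>c<n2. \<Sum>e<n2. (if c = e then 1 else 0) * (?K1 a b * ?K2 c e)))"
      by (intro sum.cong refl) (auto simp: sum_distrib_left)
    also have "\<dots> = (\<Sum>c<n2. \<Sum>e<n2. (if c = e then 1 else 0) * (?K1 a a * ?K2 c e))"
      using a by (simp add: sum_delta_l)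
    also have "\<dots> = (\<Sum>c<n2. ?K1 a a * ?K2 c c)"
      by (intro sum.cong refl) (simp add: sum_delta_l2)
    finally show "(\<Sum>b<n1. \<Sum>c<n2. \<Sum>e<n2. (if a = b \<and> c = e then 1 else 0) * (?K1 a b * ?K2 c e)) =
          (\<Sum>c<n2. ?K1 a a * ?K2 c c)" .
  qed
  also have "\<dots> = (\<Sum>a<n1. ?K1 a a) * (\<Sum>c<n2. ?K2 c c)"
    by (rule sum_product[symmetric])
  also have "\<dots> = L1 (1\<^sub>m n1) $$ (x div m2, y div m2) * L2 (1\<^sub>m n2) $$ (x mod m2, y mod m2)"
    using lin_one[OF l1 d1] lin_one[OF l2 d2] by simp
  also have "\<dots> = 1\<^sub>m (m1*m2) $$ (x,y)"
  proof -
    have "x = y \<longleftrightarrow> (x div m2 = y div m2 \<and> x mod m2 = y mod m2)" by (metis div_mult_mod_eq)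
    then show ?thesis unfolding u1 u2 using d1 d2 xy by simp
  qed
  finally show "tensor_map n1 n2 m1 m2 L1 L2 (1\<^sub>m (n1*n2)) $$ (x,y) = 1\<^sub>m (m1*m2) $$ (x,y)" .
qed (auto simp: tensor_map_def)



definition swp :: "nat \<Rightarrow> nat \<Rightarrow> nat \<Rightarrow> nat" where
  "swp n m x = (x mod m) * n + x div m"

lemma swp_lt:
  assumes "x < n * m" shows "swp n m x < n * m"
proof -
  have m: "0 < m" using assms by (cases m) auto
  have "x div m < n" using assms by (simp add: less_mult_imp_div_less)
  then have "swp n m x < (x mod m) * n + n" unfolding swp_def by simp
  also have "\<dots> = (x mod m + 1) * n" by simp
  also have "\<dots> \<le> m * n" using m by (intro mult_right_mono) (auto simp: Suc_le_eq)
  finally show ?thesis by (simp add: mult.commute)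
qed

lemma swp_swp:
  assumes "x < n * m" shows "swp m n (swp n m x) = x"
proof -
  have m: "0 < m" using assms by (cases m) auto
  have d: "x div m < n" using assms by (simp add: less_mult_imp_div_less)
  have "swp n m x mod n = x div m" "swp n m x div n = x mod m"
    unfolding swp_def using d by simp_all
  then show ?thesis unfolding swp_def by simp
qed

lemma swp_bij: "bij_betw (swp n m) {..<n * m} {..<n * m}"
proof (rule bij_betw_byWitness[where f' = "swp m n"])
  show "\<forall>a\<in>{..<n * m}. swp m n (swp n m a) = a" using swp_swp by auto
  show "\<forall>a'\<in>{..<n * m}. swp n m (swp m n a') = a'"
    using swp_swp[of _ m n] by (auto simp: mult.commute)
  show "swp n m ` {..<n * m} \<subseteq> {..<n * m}" using swp_lt by auto
  show "swp m n ` {..<n * m} \<subseteq> {..<n * m}" using swp_lt[of _ m n] by (auto simp: mult.commute)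
qed

lemma block_entry:
  assumes L: "lin_map n m L" and ij: "i < k * m" "j < k * m"
  shows "block_apply k n m L X $$ (i,j) =
    (\<Sum>a<n. \<Sum>b<n. X $$ ((i div m) * n + a, (j div m) * n + b) * L (munit n a b) $$ (i mod m, j mod m))"
proof -
  have m: "0 < m" using ij by (cases m) auto
  have "block_apply k n m L X $$ (i,j) =
      L (mat n n (\<lambda>(p, q). X $$ ((i div m) * n + p, (j div m) * n + q))) $$ (i mod m, j mod m)"
    unfolding block_apply_def using ij by simp
  also have "\<dots> = (\<Sum>a<n. \<Sum>b<n. X $$ ((i div m) * n + a, (j div m) * n + b) * L (munit n a b) $$ (i mod m, j mod m))"
    by (subst lin_rep[OF L]) (use m in auto)
  finally show ?thesis .
qed

lemma cp_lin: "cp_map n m L \<Longrightarrow> lin_map n m L"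
  unfolding cp_map_def by auto

lemma cp_psd: "cp_map n m L \<Longrightarrow> psd (k * n) X \<Longrightarrow> psd (k * m) (block_apply k n m L X)"
  unfolding cp_map_def by auto

lemma tm_psd:
  assumes cp1: "cp_map n1 m1 L1" and cp2: "cp_map n2 m2 L2" and X: "psd (n1 * n2) X"
  shows "psd (m1 * m2) (tensor_map n1 n2 m1 m2 L1 L2 X)"
proof -
  have l1: "lin_map n1 m1 L1" and l2: "lin_map n2 m2 L2" using cp1 cp2 by (auto simp: cp_lin)
  define Y where "Y = block_apply n1 n2 m2 L2 X"
  have Yp: "psd (m2 * n1) Y" unfolding Y_def using cp_psd[OF cp2 X] by (simp add: mult.commute)
  define Y' where "Y' = mat (m2 * n1) (m2 * n1) (\<lambda>(x,y). Y $$ (swp m2 n1 x, swp m2 n1 y))"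
  have Y'p: "psd (m2 * n1) Y'" unfolding Y'_def by (rule psd_perm[OF Yp swp_bij])
  define Z where "Z = block_apply m2 n1 m1 L1 Y'"
  have Zp: "psd (m1 * m2) Z" unfolding Z_def using cp_psd[OF cp1 Y'p] by (simp add: mult.commute)
  define W where "W = mat (m1 * m2) (m1 * m2) (\<lambda>(x,y). Z $$ (swp m1 m2 x, swp m1 m2 y))"
  have Wp: "psd (m1 * m2) W" unfolding W_def by (rule psd_perm[OF Zp swp_bij])
  have "tensor_map n1 n2 m1 m2 L1 L2 X = W"
  proof (rule eq_matI)
    fix x y assume "x < dim_row W" "y < dim_col W"
    then have xy: "x < m1 * m2" "y < m1 * m2" unfolding W_def by auto
    have m2: "0 < m2" using xy by (cases m2) auto
    define p where "p = x div m2"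
    define q where "q = x mod m2"
    define r where "r = y div m2"
    define s where "s = y mod m2"
    have pr: "p < m1" "r < m1" unfolding p_def r_def using xy by (simp_all add: less_mult_imp_div_less)
    have qs: "q < m2" "s < m2" unfolding q_def s_def using m2 by simp_all
    have sx: "swp m1 m2 x = q * m1 + p" "swp m1 m2 y = s * m1 + r"
      unfolding swp_def p_def q_def r_def s_def by simp_all
    have lt1: "q * m1 + p < m2 * m1" "s * m1 + r < m2 * m1"
      using idx_lt[OF qs(1) pr(1)] idx_lt[OF qs(2) pr(2)] by simp_all
    have "W $$ (x,y) = Z $$ (q * m1 + p, s * m1 + r)" unfolding W_def using xy sx by simp
    also have "\<dots> = (\<Sum>a<n1. \<Sum>b<n1. Y' $$ (q * n1 + a, s * n1 + b) * L1 (munit n1 a b) $$ (p, r))"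
      unfolding Z_def block_entry[OF l1 lt1] using pr by simp
    also have "\<dots> = (\<Sum>a<n1. \<Sum>b<n1. (\<Sum>c<n2. \<Sum>e<n2. X $$ (a * n2 + c, b * n2 + e) * L2 (munit n2 c e) $$ (q, s))
                        * L1 (munit n1 a b) $$ (p, r))"
    proof (intro sum.cong refl)
      fix a b assume ab: "a \<in> {..<n1}" "b \<in> {..<n1}"
      have lt2: "q * n1 + a < m2 * n1" "s * n1 + b < m2 * n1"
        using idx_lt[OF qs(1), of a n1] idx_lt[OF qs(2), of b n1] ab by auto
      have sw: "swp m2 n1 (q * n1 + a) = a * m2 + q" "swp m2 n1 (s * n1 + b) = b * m2 + s"
        unfolding swp_def using ab by simp_all
      have lt3: "a * m2 + q < n1 * m2" "b * m2 + s < n1 * m2"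
        using idx_lt[OF _ qs(1), of a n1] idx_lt[OF _ qs(2), of b n1] ab by auto
      have "Y' $$ (q * n1 + a, s * n1 + b) = Y $$ (a * m2 + q, b * m2 + s)"
        unfolding Y'_def using lt2 sw by simp
      also have "\<dots> = (\<Sum>c<n2. \<Sum>e<n2. X $$ (a * n2 + c, b * n2 + e) * L2 (munit n2 c e) $$ (q, s))"
        unfolding Y_def block_entry[OF l2 lt3] using qs by simp
      finally show "Y' $$ (q * n1 + a, s * n1 + b) * L1 (munit n1 a b) $$ (p, r) =
         (\<Sum>c<n2. \<Sum>e<n2. X $$ (a * n2 + c, b * n2 + e) * L2 (munit n2 c e) $$ (q, s)) * L1 (munit n1 a b) $$ (p, r)"
        by simp
    qed
    also have "\<dots> = tensor_map n1 n2 m1 m2 L1 L2 X $$ (x,y)"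
      unfolding tm_entry[OF l1 l2 xy] p_def[symmetric] q_def[symmetric] r_def[symmetric] s_def[symmetric]
      by (simp add: sum_distrib_left sum_distrib_right mult_ac)
    finally show "tensor_map n1 n2 m1 m2 L1 L2 X $$ (x,y) = W $$ (x,y)" by simp
  qed (auto simp: W_def tensor_map_def)
  then show ?thesis using Wp by simp
qed



definition obj :: "nat \<Rightarrow> nat \<Rightarrow> nat \<Rightarrow> nat \<Rightarrow> nat \<Rightarrow> (nat \<Rightarrow> complex mat) \<Rightarrow> (nat \<Rightarrow> complex mat)
   \<Rightarrow> (complex mat \<Rightarrow> complex mat) \<Rightarrow> (complex mat \<Rightarrow> complex mat) \<Rightarrow> real" where
  "obj n1 n2 m1 m2 d F P L1 L2 = Re (\<Sum>j<d. mtrace (tensor_map n1 n2 m1 m2 L1 L2 (F j) * P j))"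

lemma mult_entry:
  "A \<in> carrier_mat N N \<Longrightarrow> B \<in> carrier_mat N N \<Longrightarrow> i < N \<Longrightarrow> l < N \<Longrightarrow>
   (A * B) $$ (i,l) = (\<Sum>k<N. A $$ (i,k) * B $$ (k,l))"
  by (simp add: scalar_prod_def lessThan_atLeast0)

lemma mtrace_carrier: "A \<in> carrier_mat N N \<Longrightarrow> mtrace A = (\<Sum>i<N. A $$ (i,i))"
  unfolding mtrace_def by simp

lemma msum_carrier[simp]: "msum N d F \<in> carrier_mat N N"
  unfolding msum_def by simp

lemma mult_msum_right:
  assumes A: "A \<in> carrier_mat N N" and P: "\<And>k. k < d \<Longrightarrow> P k \<in> carrier_mat N N"
    and il: "i < N" "l < N"
  shows "(A * msum N d P) $$ (i,l) = (\<Sum>k<d. (A * P k) $$ (i,l))"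
proof -
  have "(A * msum N d P) $$ (i,l) = (\<Sum>x<N. A $$ (i,x) * (\<Sum>k<d. P k $$ (x,l)))"
    using A il by (simp add: mult_entry msum_index)
  also have "\<dots> = (\<Sum>x<N. \<Sum>k<d. A $$ (i,x) * P k $$ (x,l))" by (simp add: sum_distrib_left)
  also have "\<dots> = (\<Sum>k<d. \<Sum>x<N. A $$ (i,x) * P k $$ (x,l))" by (rule sum.swap)
  also have "\<dots> = (\<Sum>k<d. (A * P k) $$ (i,l))"
    by (rule sum.cong[OF refl]) (use A P il in \<open>simp add: mult_entry\<close>)
  finally show ?thesis .
qed

lemma mult_msum_left:
  assumes B: "B \<in> carrier_mat N N" and A: "\<And>k. k < d \<Longrightarrow> A k \<in> carrier_mat N N"
    and il: "i < N" "l < N"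
  shows "(msum N d A * B) $$ (i,l) = (\<Sum>k<d. (A k * B) $$ (i,l))"
proof -
  have "(msum N d A * B) $$ (i,l) = (\<Sum>x<N. (\<Sum>k<d. A k $$ (i,x)) * B $$ (x,l))"
    using il by (simp add: mult_entry[OF msum_carrier B il] msum_index)
  also have "\<dots> = (\<Sum>x<N. \<Sum>k<d. A k $$ (i,x) * B $$ (x,l))" by (simp add: sum_distrib_right)
  also have "\<dots> = (\<Sum>k<d. \<Sum>x<N. A k $$ (i,x) * B $$ (x,l))" by (rule sum.swap)
  also have "\<dots> = (\<Sum>k<d. (A k * B) $$ (i,l))"
  proof (rule sum.cong[OF refl])
    fix k assume "k \<in> {..<d}"
    then show "(\<Sum>x<N. A k $$ (i,x) * B $$ (x,l)) = (A k * B) $$ (i,l)"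
      using mult_entry[OF A[of k] B il] by simp
  qed
  finally show ?thesis .
qed

lemma trace_msum:
  assumes A: "A \<in> carrier_mat N N" and P: "\<And>k. k < d \<Longrightarrow> P k \<in> carrier_mat N N"
  shows "(\<Sum>k<d. mtrace (A * P k)) = mtrace (A * msum N d P)"
proof -
  have "mtrace (A * msum N d P) = (\<Sum>i<N. \<Sum>k<d. (A * P k) $$ (i,i))"
    using A by (simp add: mtrace_carrier[of _ N] mult_msum_right[OF A P])
  also have "\<dots> = (\<Sum>k<d. \<Sum>i<N. (A * P k) $$ (i,i))" by (rule sum.swap)
  also have "\<dots> = (\<Sum>k<d. mtrace (A * P k))"
    by (rule sum.cong[OF refl]) (use A P in \<open>simp add: mtrace_carrier[of _ N]\<close>)
  finally show ?thesis by simp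
qed

lemma trace_sum:
  assumes A: "\<And>k. k < d \<Longrightarrow> A k \<in> carrier_mat N N"
  shows "(\<Sum>k<d. mtrace (A k)) = mtrace (msum N d A)"
proof -
  have "mtrace (msum N d A) = (\<Sum>i<N. \<Sum>k<d. A k $$ (i,i))"
    by (simp add: mtrace_carrier[of _ N] msum_index)
  also have "\<dots> = (\<Sum>k<d. \<Sum>i<N. A k $$ (i,i))" by (rule sum.swap)
  also have "\<dots> = (\<Sum>k<d. mtrace (A k))"
    by (rule sum.cong[OF refl]) (use A in \<open>simp add: mtrace_carrier[of _ N]\<close>)
  finally show ?thesis by simp
qed

lemma proj_facts:
  assumes "projective_measurement N d P" "k < d"
  shows "psd N (P k)" "P k \<in> carrier_mat N N" "adj (P k) = P k" "P k * P k = P k"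
  using assms unfolding projective_measurement_def povm_def psd_def by auto

context
  fixes n1 n2 m1 m2 d :: nat and F P :: "nat \<Rightarrow> complex mat" and L1 L2
  assumes c1: "cpu_map n1 m1 L1" and c2: "cpu_map n2 m2 L2"
    and PM: "projective_measurement (m1 * m2) d P" and FM: "povm (n1 * n2) d F"
begin

abbreviation "NN \<equiv> m1 * m2"
abbreviation "AA j \<equiv> tensor_map n1 n2 m1 m2 L1 L2 (F j)"

lemma l1: "lin_map n1 m1 L1" and l2: "lin_map n2 m2 L2"
  using c1 c2 unfolding cpu_map_def cp_map_def by auto

lemma A_psd: "j < d \<Longrightarrow> psd NN (AA j)"
  using tm_psd[of n1 m1 L1 n2 m2 L2 "F j"] c1 c2 FM unfolding cpu_map_def povm_def by auto

lemma A_carrier: "AA j \<in> carrier_mat NN NN" by (rule tm_carrier)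

lemma A_msum: "msum NN d AA = 1\<^sub>m NN"
proof (rule eq_matI)
  fix x y assume "x < dim_row (1\<^sub>m NN :: complex mat)" "y < dim_col (1\<^sub>m NN :: complex mat)"
  then have xy: "x < NN" "y < NN" by auto
  have "msum NN d AA $$ (x,y) = tensor_map n1 n2 m1 m2 L1 L2 (msum (n1*n2) d F) $$ (x,y)"
    using xy by (simp add: msum_index tm_msum[OF l1 l2 xy])
  also have "\<dots> = 1\<^sub>m NN $$ (x,y)"
    using FM tm_one[OF c1 c2] unfolding povm_def by simp
  finally show "msum NN d AA $$ (x,y) = 1\<^sub>m NN $$ (x,y)" .
qed (auto simp: msum_def)

definition S where "S j k = Re (mtrace (AA j * P k))"

lemma S_nonneg: "j < d \<Longrightarrow> k < d \<Longrightarrow> 0 \<le> S j k"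
  unfolding S_def using trace_nonneg[OF A_psd] proj_facts[OF PM] by auto

lemma S_row: "j < d \<Longrightarrow> (\<Sum>k<d. S j k) = Re (mtrace (AA j))"
proof -
  assume j: "j < d"
  have "(\<Sum>k<d. S j k) = Re (\<Sum>k<d. mtrace (AA j * P k))" unfolding S_def by simp
  also have "\<dots> = Re (mtrace (AA j * msum NN d P))"
    using trace_msum[OF A_carrier, of d P] proj_facts(2)[OF PM] by simp
  also have "msum NN d P = 1\<^sub>m NN" using PM unfolding projective_measurement_def povm_def by simp
  finally show ?thesis using A_carrier[of j] by simp
qed

lemma S_total: "(\<Sum>j<d. \<Sum>k<d. S j k) = real NN"
proof -
  have "(\<Sum>j<d. \<Sum>k<d. S j k) = (\<Sum>j<d. Re (mtrace (AA j)))" by (simp add: S_row)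
  also have "\<dots> = Re (\<Sum>j<d. mtrace (AA j))" by simp
  also have "\<dots> = Re (mtrace (msum NN d AA))" using trace_sum[of d AA NN] A_carrier by simp
  also have "\<dots> = real NN" unfolding A_msum mtrace_def by simp
  finally show ?thesis .
qed

lemma obj_S: "obj n1 n2 m1 m2 d F P L1 L2 = (\<Sum>j<d. S j j)"
  unfolding obj_def S_def by simp

lemma obj_le: "obj n1 n2 m1 m2 d F P L1 L2 \<le> real NN"
proof -
  have "(\<Sum>j<d. S j j) \<le> (\<Sum>j<d. \<Sum>k<d. S j k)"
    by (rule sum_mono) (rule member_le_sum, auto simp: S_nonneg)
  then show ?thesis unfolding obj_S S_total .
qed

lemma obj_eq:
  assumes "obj n1 n2 m1 m2 d F P L1 L2 = real NN"
  shows "\<forall>j<d. AA j = P j"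
proof -
  have tot: "(\<Sum>j<d. (\<Sum>k<d. S j k) - S j j) = 0"
    using assms unfolding obj_S by (simp add: sum_subtractf S_total)
  have nn: "\<And>j. j \<in> {..<d} \<Longrightarrow> 0 \<le> (\<Sum>k<d. S j k) - S j j"
    using member_le_sum[of _ "{..<d}" "S _"] S_nonneg by auto
  have z1: "\<And>j. j < d \<Longrightarrow> (\<Sum>k<d. S j k) - S j j = 0"
    using tot nn sum_nonneg_eq_0_iff[of "{..<d}" "\<lambda>j. (\<Sum>k<d. S j k) - S j j"] by auto
  have off: "S j k = 0" if jk: "j < d" "k < d" "k \<noteq> j" for j k
  proof -
    have "(\<Sum>k<d. S j k) = S j j + (\<Sum>k\<in>{..<d} - {j}. S j k)"
      using jk by (simp add: sum.remove[of "{..<d}" j])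
    then have "(\<Sum>k\<in>{..<d} - {j}. S j k) = 0" using z1[OF jk(1)] by simp
    then have "\<forall>k\<in>{..<d} - {j}. S j k = 0"
      by (subst sum_nonneg_eq_0_iff[symmetric]) (use S_nonneg jk in auto)
    then show ?thesis using jk by auto
  qed
  have zero: "AA j * P k = 0\<^sub>m NN NN" if jk: "j < d" "k < d" "k \<noteq> j" for j k
    using trace_zero[OF A_psd[OF jk(1)] proj_facts(2-4)[OF PM jk(2)]] off[OF jk] unfolding S_def by simp
  show ?thesis
  proof (intro allI impI)
    fix j assume j: "j < d"
    have Pc: "\<And>k. k < d \<Longrightarrow> P k \<in> carrier_mat NN NN" using proj_facts(2)[OF PM] by auto
    have e1: "AA j = AA j * P j"
    proof (rule eq_matI)
      fix x y assume "x < dim_row (AA j * P j)" "y < dim_col (AA j * P j)"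
      then have xy: "x < NN" "y < NN" using A_carrier[of j] Pc[OF j] by auto
      have "AA j $$ (x,y) = (AA j * msum NN d P) $$ (x,y)"
        using PM xy A_carrier[of j] unfolding projective_measurement_def povm_def by simp
      also have "\<dots> = (\<Sum>k<d. (AA j * P k) $$ (x,y))" by (rule mult_msum_right[OF A_carrier Pc xy])
      also have "\<dots> = (AA j * P j) $$ (x,y)"
      proof -
        have "(\<Sum>k<d. (AA j * P k) $$ (x,y)) = (\<Sum>k<d. if k = j then (AA j * P j) $$ (x,y) else 0)"
          by (rule sum.cong[OF refl]) (use zero j xy in auto)
        then show ?thesis using j by simp
      qed
      finally show "AA j $$ (x,y) = (AA j * P j) $$ (x,y)" .
    qed (use A_carrier[of j] Pc[OF j] in auto)
    have e2: "P j = AA j * P j"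
    proof (rule eq_matI)
      fix x y assume "x < dim_row (AA j * P j)" "y < dim_col (AA j * P j)"
      then have xy: "x < NN" "y < NN" using A_carrier[of j] Pc[OF j] by auto
      have "P j $$ (x,y) = (msum NN d AA * P j) $$ (x,y)"
        unfolding A_msum using Pc[OF j] xy by simp
      also have "\<dots> = (\<Sum>k<d. (AA k * P j) $$ (x,y))" by (rule mult_msum_left[OF Pc[OF j] A_carrier xy])
      also have "\<dots> = (AA j * P j) $$ (x,y)"
      proof -
        have "(\<Sum>k<d. (AA k * P j) $$ (x,y)) = (\<Sum>k<d. if k = j then (AA j * P j) $$ (x,y) else 0)"
          by (rule sum.cong[OF refl]) (use zero j xy in auto)
        then show ?thesis using j by simp
      qed
      finally show "P j $$ (x,y) = (AA j * P j) $$ (x,y)" .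
    qed (use A_carrier[of j] Pc[OF j] in auto)
    show "AA j = P j" using e1 e2 by simp
  qed
qed

end



lemma sum_split:
  "(\<Sum>x<k*m. f x) = (\<Sum>a<k. \<Sum>i<m. f (a*m+i)) " for f :: "nat \<Rightarrow> complex"
proof (induction k)
  case 0 then show ?case by simp
next
  case (Suc k)
  have "{..<Suc k * m} = {..<k*m} \<union> {k*m..<k*m+m}" by auto
  then have "(\<Sum>x<Suc k * m. f x) = (\<Sum>x<k*m. f x) + (\<Sum>x\<in>{k*m..<k*m+m}. f x)"
    by (simp add: sum.union_disjoint ivl_disj_int)
  also have "(\<Sum>x\<in>{k*m..<k*m+m}. f x) = (\<Sum>i<m. f (k*m+i))"
    by (rule sum.reindex_bij_witness[where j = "\<lambda>x. x - k*m" and i = "\<lambda>i. k*m+i"]) auto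
  finally show ?case using Suc by simp
qed

lemma psd_rank1:
  "psd N (mat N N (\<lambda>(p,q). v p * cnj (v q)))"
  unfolding psd_iff
proof (intro conjI allI)
  let ?X = "mat N N (\<lambda>(p,q). v p * cnj (v q))"
  show "?X \<in> carrier_mat N N" by simp
  show "adj ?X = ?X" unfolding herm_iff[OF mat_carrier] by simp
  fix x :: "nat \<Rightarrow> complex"
  define s where "s = (\<Sum>i<N. v i * cnj (x i))"
  have "qf N ?X x = (\<Sum>i<N. \<Sum>k<N. (v i * cnj (x i)) * (cnj (v k) * x k))"
    unfolding qf_def by (intro sum.cong refl) (simp add: mult_ac)
  also have "\<dots> = s * cnj s" unfolding s_def by (simp add: sum_product)
  finally have "qf N ?X x = s * cnj s" .
  then show "0 \<le> Re (qf N ?X x)" by (simp add: complex_mult_cnj)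
qed

lemma cpu_entry_bound:
  assumes L: "cpu_map n m L" and ab: "a < n" "b < n" and ij: "i < m" "j < m"
  shows "cmod (L (munit n a b) $$ (i,j)) \<le> 2"
proof -
  have l: "lin_map n m L" using L unfolding cpu_map_def cp_map_def by auto
  have cp: "cp_map n m L" using L unfolding cpu_map_def by auto
  have u: "L (1\<^sub>m n) = 1\<^sub>m m" using L unfolding cpu_map_def by auto
  define w where "w p = (if p div n = p mod n then 1 else (0::complex))" for p
  define X where "X = mat (n*n) (n*n) (\<lambda>(p,q). w p * cnj (w q))"
  have Xp: "psd (n*n) X" unfolding X_def by (rule psd_rank1)
  define J where "J = block_apply n n m L X"
  have Jp: "psd (n*m) J" unfolding J_def by (rule cp_psd[OF cp Xp])
  have Jent: "J $$ (a'*m+i', b'*m+j') = L (munit n a' b') $$ (i',j')"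
    if h: "a' < n" "b' < n" "i' < m" "j' < m" for a' b' i' j'
  proof -
    have lt: "a'*m+i' < n*m" "b'*m+j' < n*m" using idx_lt h by auto
    have "J $$ (a'*m+i', b'*m+j') = (\<Sum>p<n. \<Sum>q<n. X $$ (a' * n + p, b' * n + q) * L (munit n p q) $$ (i', j'))"
      unfolding J_def block_entry[OF l lt] using h by simp
    also have "\<dots> = (\<Sum>p<n. \<Sum>q<n. ((if p = a' then 1 else 0) * (if q = b' then 1 else 0)) * L (munit n p q) $$ (i', j'))"
    proof (intro sum.cong refl)
      fix p q assume pq: "p \<in> {..<n}" "q \<in> {..<n}"
      have lt2: "a' * n + p < n * n" "b' * n + q < n * n" using idx_lt h pq by auto
      have "w (a' * n + p) = (if p = a' then 1 else 0)" "w (b' * n + q) = (if q = b' then 1 else 0)"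
        unfolding w_def using pq by auto
      then show "X $$ (a' * n + p, b' * n + q) * L (munit n p q) $$ (i', j') =
        ((if p = a' then 1 else 0) * (if q = b' then 1 else 0)) * L (munit n p q) $$ (i', j')"
        unfolding X_def using lt2 by simp
    qed
    also have "\<dots> = (\<Sum>p<n. (if p = a' then 1 else 0) * (\<Sum>q<n. (if q = b' then 1 else 0) * L (munit n p q) $$ (i', j')))"
      by (simp add: sum_distrib_left mult.assoc)
    also have "\<dots> = L (munit n a' b') $$ (i',j')" using h by (simp add: sum_delta_l)
    finally show ?thesis .
  qed
  have diag: "Re (L (munit n c c) $$ (k,k)) \<le> 1" if "c < n" "k < m" for c k
  proof -
    have nn: "\<And>c'. c' < n \<Longrightarrow> 0 \<le> Re (L (munit n c' c') $$ (k,k))"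
    proof -
      fix c' assume c': "c' < n"
      have "c'*m+k < n*m" using idx_lt c' that by auto
      then show "0 \<le> Re (L (munit n c' c') $$ (k,k))"
        using psd_diag_nonneg[OF Jp, of "c'*m+k"] Jent[OF c' c' that(2) that(2)] by simp
    qed
    have "Re (L (munit n c c) $$ (k,k)) \<le> (\<Sum>c'<n. Re (L (munit n c' c') $$ (k,k)))"
      by (rule member_le_sum) (use nn that in auto)
    also have "\<dots> = Re (L (1\<^sub>m n) $$ (k,k))" using lin_one[OF l that(2) that(2)] by simp
    also have "\<dots> = 1" using u that by simp
    finally show ?thesis .
  qed
  have lt: "a*m+i < n*m" "b*m+j < n*m" using idx_lt ab ij by auto
  have "cmod (L (munit n a b) $$ (i,j)) = cmod (J $$ (a*m+i, b*m+j))" using Jent ab ij by simp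
  also have "\<dots> \<le> Re (J $$ (a*m+i, a*m+i)) + Re (J $$ (b*m+j, b*m+j))"
    by (rule psd_entry_bound[OF Jp lt])
  also have "\<dots> = Re (L (munit n a a) $$ (i,i)) + Re (L (munit n b b) $$ (j,j))"
    using Jent ab ij by simp
  also have "\<dots> \<le> 2" using diag ab ij by (smt (verit))
  finally show ?thesis .
qed

definition L0 :: "nat \<Rightarrow> complex mat \<Rightarrow> complex mat" where
  "L0 m A = A $$ (0,0) \<cdot>\<^sub>m 1\<^sub>m m"

lemma L0_cpu:
  assumes n: "0 < n" and m: "0 < m"
  shows "cpu_map n m (L0 m)"
proof -
  have lin: "lin_map n m (L0 m)"
    unfolding lin_map_def L0_def using n
    by (auto intro!: eq_matI simp: algebra_simps)
  have cp: "psd (k * m) (block_apply k n m (L0 m) X)" if X: "psd (k * n) X" for k X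
  proof -
    let ?B = "block_apply k n m (L0 m) X"
    have ent: "?B $$ (x,y) = X $$ ((x div m) * n, (y div m) * n) * (if x mod m = y mod m then 1 else 0)"
      if "x < k * m" "y < k * m" for x y
      unfolding block_apply_def L0_def using that n m by simp
    have Bc: "?B \<in> carrier_mat (k*m) (k*m)" unfolding block_apply_def by simp
    show ?thesis unfolding psd_iff
    proof (intro conjI allI)
      show "?B \<in> carrier_mat (k*m) (k*m)" by (rule Bc)
      have hx: "X $$ ((y div m) * n, (x div m) * n) = cnj (X $$ ((x div m) * n, (y div m) * n))"
        if "x < k * m" "y < k * m" for x y
      proof -
        have "x div m < k" "y div m < k" using that by (simp_all add: less_mult_imp_div_less)
        then have "(x div m) * n < k * n" "(y div m) * n < k * n" using idx_lt[of _ k 0 n] n by auto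
        then show ?thesis using psd_herm[OF X, of "(x div m) * n" "(y div m) * n"] by simp
      qed
      show "adj ?B = ?B" unfolding herm_iff[OF Bc]
      proof (intro allI impI)
        fix x y assume "x < k * m" "y < k * m"
        then show "cnj (?B $$ (y,x)) = ?B $$ (x,y)" using ent hx[of x y] by auto
      qed
      fix v :: "nat \<Rightarrow> complex"
      define u where "u i z = (if z mod n = 0 then v ((z div n) * m + i) else 0)" for i z
      have "qf (k*m) ?B v = (\<Sum>a<k. \<Sum>i<m. \<Sum>b<k. \<Sum>j<m.
          ?B $$ (a*m+i, b*m+j) * v (b*m+j) * cnj (v (a*m+i)))"
        unfolding qf_def by (simp add: sum_split)
      also have "\<dots> = (\<Sum>a<k. \<Sum>i<m. \<Sum>b<k. \<Sum>j<m. (if i = j then 1 else 0) *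
          (X $$ (a*n, b*n) * v (b*m+j) * cnj (v (a*m+i))))"
      proof (intro sum.cong refl)
        fix a i b j assume h: "a \<in> {..<k}" "i \<in> {..<m}" "b \<in> {..<k}" "j \<in> {..<m}"
        then have "a*m+i < k*m" "b*m+j < k*m" using idx_lt by auto
        then show "?B $$ (a*m+i, b*m+j) * v (b*m+j) * cnj (v (a*m+i)) = (if i = j then 1 else 0) *
          (X $$ (a*n, b*n) * v (b*m+j) * cnj (v (a*m+i)))"
          using h by (simp add: ent)
      qed
      also have "\<dots> = (\<Sum>a<k. \<Sum>i<m. \<Sum>b<k. X $$ (a*n, b*n) * v (b*m+i) * cnj (v (a*m+i)))"
        by (intro sum.cong refl) (simp add: sum_delta_l2)
      also have "\<dots> = (\<Sum>i<m. \<Sum>a<k. \<Sum>b<k. X $$ (a*n, b*n) * v (b*m+i) * cnj (v (a*m+i)))"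
        by (rule sum.swap)
      also have "\<dots> = (\<Sum>i<m. qf (k*n) X (u i))"
      proof (rule sum.cong[OF refl])
        fix i assume i: "i \<in> {..<m}"
        have "qf (k*n) X (u i) = (\<Sum>a<k. \<Sum>c<n. \<Sum>b<k. \<Sum>e<n.
           X $$ (a*n+c, b*n+e) * u i (b*n+e) * cnj (u i (a*n+c)))"
          unfolding qf_def by (simp add: sum_split)
        also have "\<dots> = (\<Sum>a<k. \<Sum>c<n. \<Sum>b<k. \<Sum>e<n. (if c = 0 then 1 else 0) * ((if e = 0 then 1 else 0) *
           (X $$ (a*n+c, b*n+e) * v (b*m+i) * cnj (v (a*m+i)))))"
        proof (intro sum.cong refl)
          fix a c b e assume h: "a \<in> {..<k}" "c \<in> {..<n}" "b \<in> {..<k}" "e \<in> {..<n}"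
          have "u i (b*n+e) = (if e = 0 then v (b*m+i) else 0)" "u i (a*n+c) = (if c = 0 then v (a*m+i) else 0)"
            unfolding u_def using h by auto
          then show "X $$ (a*n+c, b*n+e) * u i (b*n+e) * cnj (u i (a*n+c)) =
            (if c = 0 then 1 else 0) * ((if e = 0 then 1 else 0) * (X $$ (a*n+c, b*n+e) * v (b*m+i) * cnj (v (a*m+i))))"
            by simp
        qed
        also have "\<dots> = (\<Sum>a<k. \<Sum>b<k. X $$ (a*n, b*n) * v (b*m+i) * cnj (v (a*m+i)))"
        proof (rule sum.cong[OF refl])
          fix a
          have "(\<Sum>c<n. \<Sum>b<k. \<Sum>e<n. (if c = 0 then 1 else 0) * ((if e = 0 then 1 else 0) *
             (X $$ (a*n+c, b*n+e) * v (b*m+i) * cnj (v (a*m+i))))) =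
            (\<Sum>c<n. (if c = 0 then 1 else 0) * (\<Sum>b<k. \<Sum>e<n. (if e = 0 then 1 else 0) *
             (X $$ (a*n+c, b*n+e) * v (b*m+i) * cnj (v (a*m+i)))))"
            by (simp add: sum_distrib_left)
          also have "\<dots> = (\<Sum>b<k. \<Sum>e<n. (if e = 0 then 1 else 0) *
             (X $$ (a*n, b*n+e) * v (b*m+i) * cnj (v (a*m+i))))"
            using n by (simp add: sum_delta_l)
          also have "\<dots> = (\<Sum>b<k. X $$ (a*n, b*n) * v (b*m+i) * cnj (v (a*m+i)))"
            using n by (simp add: sum_delta_l)
          finally show "(\<Sum>c<n. \<Sum>b<k. \<Sum>e<n. (if c = 0 then 1 else 0) * ((if e = 0 then 1 else 0) *
             (X $$ (a*n+c, b*n+e) * v (b*m+i) * cnj (v (a*m+i))))) =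
             (\<Sum>b<k. X $$ (a*n, b*n) * v (b*m+i) * cnj (v (a*m+i)))" .
        qed
        finally show "(\<Sum>a<k. \<Sum>b<k. X $$ (a*n, b*n) * v (b*m+i) * cnj (v (a*m+i))) = qf (k*n) X (u i)" by simp
      qed
      finally have "qf (k*m) ?B v = (\<Sum>i<m. qf (k*n) X (u i))" .
      then show "0 \<le> Re (qf (k*m) ?B v)" using psd_qf[OF X] by (simp add: sum_nonneg)
    qed
  qed
  show ?thesis unfolding cpu_map_def cp_map_def using lin cp n
    by (auto simp: L0_def)
qed



definition LL :: "nat \<Rightarrow> nat \<Rightarrow> (nat \<Rightarrow> nat \<Rightarrow> nat \<Rightarrow> nat \<Rightarrow> complex) \<Rightarrow> complex mat \<Rightarrow> complex mat" where
  "LL n m K A = mat m m (\<lambda>(i,j). \<Sum>a<n. \<Sum>b<n. A $$ (a,b) * K a b i j)"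

lemma LL_lin: "lin_map n m (LL n m K)"
  unfolding lin_map_def
proof (intro conjI ballI allI)
  fix A :: "complex mat" assume "A \<in> carrier_mat n n"
  then show "LL n m K A \<in> carrier_mat m m" unfolding LL_def by simp
next
  fix A B :: "complex mat" assume A: "A \<in> carrier_mat n n" and B: "B \<in> carrier_mat n n"
  show "LL n m K (A + B) = LL n m K A + LL n m K B"
  proof (rule eq_matI)
    fix i j assume "i < dim_row (LL n m K A + LL n m K B)" "j < dim_col (LL n m K A + LL n m K B)"
    then have ij: "i < m" "j < m" unfolding LL_def by auto
    have "(\<Sum>a<n. \<Sum>b<n. (A + B) $$ (a,b) * K a b i j) =
          (\<Sum>a<n. \<Sum>b<n. A $$ (a,b) * K a b i j) + (\<Sum>a<n. \<Sum>b<n. B $$ (a,b) * K a b i j)"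
      unfolding sum.distrib[symmetric]
      by (intro sum.cong refl) (use A B in \<open>auto simp: algebra_simps\<close>)
    then show "LL n m K (A + B) $$ (i,j) = (LL n m K A + LL n m K B) $$ (i,j)"
      unfolding LL_def using ij by simp
  qed (auto simp: LL_def)
next
  fix c :: complex and A :: "complex mat" assume A: "A \<in> carrier_mat n n"
  show "LL n m K (c \<cdot>\<^sub>m A) = c \<cdot>\<^sub>m LL n m K A"
  proof (rule eq_matI)
    fix i j assume "i < dim_row (c \<cdot>\<^sub>m LL n m K A)" "j < dim_col (c \<cdot>\<^sub>m LL n m K A)"
    then have ij: "i < m" "j < m" unfolding LL_def by auto
    have "(\<Sum>a<n. \<Sum>b<n. (c \<cdot>\<^sub>m A) $$ (a,b) * K a b i j) = c * (\<Sum>a<n. \<Sum>b<n. A $$ (a,b) * K a b i j)"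
      unfolding sum_distrib_left
      by (intro sum.cong refl) (use A in \<open>auto simp: algebra_simps\<close>)
    then show "LL n m K (c \<cdot>\<^sub>m A) $$ (i,j) = (c \<cdot>\<^sub>m LL n m K A) $$ (i,j)"
      unfolding LL_def using ij by simp
  qed (auto simp: LL_def)
qed

lemma LL_munit:
  assumes "a < n" "b < n" "i < m" "j < m"
  shows "LL n m K (munit n a b) $$ (i,j) = K a b i j"
proof -
  have "LL n m K (munit n a b) $$ (i,j) = (\<Sum>a'<n. \<Sum>b'<n. munit n a b $$ (a',b') * K a' b' i j)"
    unfolding LL_def using assms by simp
  also have "\<dots> = (\<Sum>a'<n. (if a' = a then 1 else 0) * (\<Sum>b'<n. (if b' = b then 1 else 0) * K a' b' i j))"
    by (intro sum.cong refl) (auto simp: sum_distrib_left)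
  also have "\<dots> = K a b i j" using assms by (simp add: sum_delta_l)
  finally show ?thesis .
qed

lemma psd_limit:
  assumes B: "\<And>t. psd N (B t)" and C: "C \<in> carrier_mat N N"
    and lim: "\<And>x y. x < N \<Longrightarrow> y < N \<Longrightarrow> (\<lambda>t. B t $$ (x,y)) \<longlonglongrightarrow> C $$ (x,y)"
  shows "psd N C"
  unfolding psd_iff
proof (intro conjI allI)
  show "C \<in> carrier_mat N N" by (rule C)
  show "adj C = C" unfolding herm_iff[OF C]
  proof (intro allI impI)
    fix i j assume ij: "i < N" "j < N"
    have "(\<lambda>t. cnj (B t $$ (j,i))) \<longlonglongrightarrow> cnj (C $$ (j,i))" by (intro tendsto_intros lim ij)
    moreover have "(\<lambda>t. cnj (B t $$ (j,i))) = (\<lambda>t. B t $$ (i,j))"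
      using psd_herm[OF B, of i j] ij by (auto simp: fun_eq_iff)
    ultimately have "(\<lambda>t. B t $$ (i,j)) \<longlonglongrightarrow> cnj (C $$ (j,i))" by simp
    then show "cnj (C $$ (j,i)) = C $$ (i,j)" using lim[OF ij] by (rule LIMSEQ_unique)
  qed
  fix x :: "nat \<Rightarrow> complex"
  have "(\<lambda>t. Re (qf N (B t) x)) \<longlonglongrightarrow> Re (qf N C x)"
    unfolding qf_def by (intro tendsto_intros lim) auto
  moreover have "\<forall>t. 0 \<le> Re (qf N (B t) x)" using psd_qf[OF B] by auto
  ultimately show "0 \<le> Re (qf N C x)" by (intro LIMSEQ_le_const) auto
qed

lemma LL_cpu:
  assumes L: "\<And>t. cpu_map n m (L t)"
    and lim: "\<And>a b i j. a < n \<Longrightarrow> b < n \<Longrightarrow> i < m \<Longrightarrow> j < m \<Longrightarrow>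
        (\<lambda>t. L t (munit n a b) $$ (i,j)) \<longlonglongrightarrow> K a b i j"
  shows "cpu_map n m (LL n m K)"
proof -
  have lt: "\<And>t. lin_map n m (L t)" using L unfolding cpu_map_def cp_map_def by auto
  have ct: "\<And>t. cp_map n m (L t)" using L unfolding cpu_map_def by auto
  have ut: "\<And>t. L t (1\<^sub>m n) = 1\<^sub>m m" using L unfolding cpu_map_def by auto
  have cp: "psd (k * m) (block_apply k n m (LL n m K) X)" if X: "psd (k * n) X" for k X
  proof (rule psd_limit[where B = "\<lambda>t. block_apply k n m (L t) X"])
    show "\<And>t. psd (k * m) (block_apply k n m (L t) X)" using cp_psd[OF ct X] .
    show "block_apply k n m (LL n m K) X \<in> carrier_mat (k * m) (k * m)" unfolding block_apply_def by simp
    fix x y assume xy: "x < k * m" "y < k * m"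
    have m: "0 < m" using xy by (cases m) auto
    have "block_apply k n m (LL n m K) X $$ (x,y) =
      (\<Sum>a<n. \<Sum>b<n. X $$ ((x div m) * n + a, (y div m) * n + b) * K a b (x mod m) (y mod m))"
      unfolding block_entry[OF LL_lin xy] using m by (simp add: LL_munit)
    moreover have "(\<lambda>t. block_apply k n m (L t) X $$ (x,y)) \<longlonglongrightarrow>
      (\<Sum>a<n. \<Sum>b<n. X $$ ((x div m) * n + a, (y div m) * n + b) * K a b (x mod m) (y mod m))"
      unfolding block_entry[OF lt xy] using m by (intro tendsto_intros lim) auto
    ultimately show "(\<lambda>t. block_apply k n m (L t) X $$ (x,y)) \<longlonglongrightarrow> block_apply k n m (LL n m K) X $$ (x,y)"
      by simp
  qed
  have u: "LL n m K (1\<^sub>m n) = 1\<^sub>m m"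
  proof (rule eq_matI)
    fix i j assume "i < dim_row (1\<^sub>m m :: complex mat)" "j < dim_col (1\<^sub>m m :: complex mat)"
    then have ij: "i < m" "j < m" by auto
    have e: "LL n m K (1\<^sub>m n) $$ (i,j) = (\<Sum>a<n. K a a i j)"
      unfolding lin_one[OF LL_lin ij] using ij by (intro sum.cong refl) (simp add: LL_munit)
    have "(\<lambda>t. (\<Sum>a<n. L t (munit n a a) $$ (i,j))) \<longlonglongrightarrow> (\<Sum>a<n. K a a i j)"
      using ij by (intro tendsto_intros lim) auto
    moreover have "(\<lambda>t. (\<Sum>a<n. L t (munit n a a) $$ (i,j))) = (\<lambda>t. 1\<^sub>m m $$ (i,j))"
      using lin_one[OF lt ij] ut by (simp add: fun_eq_iff)
    ultimately have "(\<lambda>t. 1\<^sub>m m $$ (i,j)) \<longlonglongrightarrow> (\<Sum>a<n. K a a i j)" by simp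
    then have "(\<Sum>a<n. K a a i j) = 1\<^sub>m m $$ (i,j)" using LIMSEQ_unique tendsto_const by blast
    then show "LL n m K (1\<^sub>m n) $$ (i,j) = 1\<^sub>m m $$ (i,j)" using e by simp
  qed (auto simp: LL_def)
  show ?thesis unfolding cpu_map_def cp_map_def using LL_lin cp u by auto
qed

definition objc :: "nat \<Rightarrow> nat \<Rightarrow> nat \<Rightarrow> nat \<Rightarrow> nat \<Rightarrow> (nat \<Rightarrow> complex mat) \<Rightarrow> (nat \<Rightarrow> complex mat)
   \<Rightarrow> (nat \<Rightarrow> nat \<Rightarrow> nat \<Rightarrow> nat \<Rightarrow> complex) \<Rightarrow> (nat \<Rightarrow> nat \<Rightarrow> nat \<Rightarrow> nat \<Rightarrow> complex) \<Rightarrow> real" where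
  "objc n1 n2 m1 m2 d F P K1 K2 = Re (\<Sum>j<d. \<Sum>x<m1*m2. \<Sum>y<m1*m2.
     (\<Sum>a<n1. \<Sum>b<n1. \<Sum>c<n2. \<Sum>e<n2. F j $$ (a * n2 + c, b * n2 + e) *
       (K1 a b (x div m2) (y div m2) * K2 c e (x mod m2) (y mod m2))) * P j $$ (y,x))"

lemma obj_objc:
  assumes L1: "lin_map n1 m1 L1" and L2: "lin_map n2 m2 L2"
    and P: "\<And>j. j < d \<Longrightarrow> P j \<in> carrier_mat (m1*m2) (m1*m2)"
  shows "obj n1 n2 m1 m2 d F P L1 L2 = objc n1 n2 m1 m2 d F P
      (\<lambda>a b i j. L1 (munit n1 a b) $$ (i,j)) (\<lambda>a b i j. L2 (munit n2 a b) $$ (i,j))"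
  unfolding obj_def objc_def
proof (intro arg_cong[where f = Re] sum.cong refl)
  fix j assume j: "j \<in> {..<d}"
  have TC: "tensor_map n1 n2 m1 m2 L1 L2 (F j) \<in> carrier_mat (m1*m2) (m1*m2)" by (rule tm_carrier)
  have PC: "P j \<in> carrier_mat (m1*m2) (m1*m2)" using P j by simp
  have "mtrace (tensor_map n1 n2 m1 m2 L1 L2 (F j) * P j) =
     (\<Sum>x<m1*m2. (tensor_map n1 n2 m1 m2 L1 L2 (F j) * P j) $$ (x,x))"
    by (rule mtrace_carrier) (rule mult_carrier_mat[OF TC PC])
  also have "\<dots> = (\<Sum>x<m1*m2. \<Sum>y<m1*m2. tensor_map n1 n2 m1 m2 L1 L2 (F j) $$ (x,y) * P j $$ (y,x))"
    by (intro sum.cong refl) (simp add: mult_entry[OF TC PC])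
  also have "\<dots> = (\<Sum>x<m1*m2. \<Sum>y<m1*m2.
     (\<Sum>a<n1. \<Sum>b<n1. \<Sum>c<n2. \<Sum>e<n2. F j $$ (a * n2 + c, b * n2 + e) *
       (L1 (munit n1 a b) $$ (x div m2, y div m2) * L2 (munit n2 c e) $$ (x mod m2, y mod m2))) * P j $$ (y,x))"
    by (intro sum.cong refl) (simp add: tm_entry[OF L1 L2])
  finally show "mtrace (tensor_map n1 n2 m1 m2 L1 L2 (F j) * P j) = (\<Sum>x<m1*m2. \<Sum>y<m1*m2.
     (\<Sum>a<n1. \<Sum>b<n1. \<Sum>c<n2. \<Sum>e<n2. F j $$ (a * n2 + c, b * n2 + e) *
       (L1 (munit n1 a b) $$ (x div m2, y div m2) * L2 (munit n2 c e) $$ (x mod m2, y mod m2))) * P j $$ (y,x))" .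
qed

lemma objc_cong:
  assumes h1: "\<And>a b i j. a < n1 \<Longrightarrow> b < n1 \<Longrightarrow> i < m1 \<Longrightarrow> j < m1 \<Longrightarrow> K1 a b i j = K1' a b i j"
    and h2: "\<And>a b i j. a < n2 \<Longrightarrow> b < n2 \<Longrightarrow> i < m2 \<Longrightarrow> j < m2 \<Longrightarrow> K2 a b i j = K2' a b i j"
  shows "objc n1 n2 m1 m2 d F P K1 K2 = objc n1 n2 m1 m2 d F P K1' K2'"
  unfolding objc_def
proof (intro arg_cong[where f = Re] sum.cong refl arg_cong2[where f = "(*)"])
  fix j x y a b c e assume h: "x \<in> {..<m1*m2}" "y \<in> {..<m1*m2}" "a \<in> {..<n1}" "b \<in> {..<n1}"
     "c \<in> {..<n2}" "e \<in> {..<n2}"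
  have m2: "0 < m2" using h by (cases m2) auto
  have "x div m2 < m1" "y div m2 < m1" using h by (simp_all add: less_mult_imp_div_less)
  moreover have "x mod m2 < m2" "y mod m2 < m2" using m2 by simp_all
  ultimately show "K1 a b (x div m2) (y div m2) = K1' a b (x div m2) (y div m2)"
    "K2 c e (x mod m2) (y mod m2) = K2' c e (x mod m2) (y mod m2)"
    using h h1 h2 by auto
qed

lemma objc_tendsto:
  assumes h1: "\<And>a b i j. a < n1 \<Longrightarrow> b < n1 \<Longrightarrow> i < m1 \<Longrightarrow> j < m1 \<Longrightarrow> (\<lambda>t. K1s t a b i j) \<longlonglongrightarrow> K1 a b i j"
    and h2: "\<And>a b i j. a < n2 \<Longrightarrow> b < n2 \<Longrightarrow> i < m2 \<Longrightarrow> j < m2 \<Longrightarrow> (\<lambda>t. K2s t a b i j) \<longlonglongrightarrow> K2 a b i j"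
  shows "(\<lambda>t. objc n1 n2 m1 m2 d F P (K1s t) (K2s t)) \<longlonglongrightarrow> objc n1 n2 m1 m2 d F P K1 K2"
  unfolding objc_def
proof (intro tendsto_intros)
  fix j x y a b c e assume h: "x \<in> {..<m1*m2}" "y \<in> {..<m1*m2}" "a \<in> {..<n1}" "b \<in> {..<n1}"
     "c \<in> {..<n2}" "e \<in> {..<n2}"
  have m2: "0 < m2" using h by (cases m2) auto
  have "x div m2 < m1" "y div m2 < m1" using h by (simp_all add: less_mult_imp_div_less)
  moreover have "x mod m2 < m2" "y mod m2 < m2" using m2 by simp_all
  ultimately show "(\<lambda>t. K1s t a b (x div m2) (y div m2)) \<longlonglongrightarrow> K1 a b (x div m2) (y div m2)"
    "(\<lambda>t. K2s t c e (x mod m2) (y mod m2)) \<longlonglongrightarrow> K2 c e (x mod m2) (y mod m2)"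
    using h h1 h2 by auto
qed



lemma subseq_conv:
  fixes x :: "nat \<Rightarrow> 'i \<Rightarrow> real"
  assumes "finite I" and "\<And>t i. i \<in> I \<Longrightarrow> \<bar>x t i\<bar> \<le> B"
  shows "\<exists>r. strict_mono r \<and> (\<forall>i\<in>I. convergent (\<lambda>t. x (r t) i))"
  using assms
proof (induction I rule: finite_induct)
  case empty
  have "strict_mono (id :: nat \<Rightarrow> nat)" by (simp add: strict_mono_def)
  then show ?case by blast
next
  case (insert i0 I)
  obtain r where r: "strict_mono r" "\<forall>i\<in>I. convergent (\<lambda>t. x (r t) i)"
    using insert.IH insert.prems by blast
  obtain s where s: "strict_mono s" "monoseq (\<lambda>t. x (r (s t)) i0)"
    using seq_monosub[of "\<lambda>t. x (r t) i0"] by blast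
  have "Bseq (\<lambda>t. x (r (s t)) i0)" by (rule BseqI') (use insert.prems in auto)
  then have c0: "convergent (\<lambda>t. x (r (s t)) i0)" using s(2) by (rule Bseq_monoseq_convergent)
  have "strict_mono (r \<circ> s)" by (rule strict_mono_o[OF r(1) s(1)])
  moreover have "\<forall>i\<in>insert i0 I. convergent (\<lambda>t. x ((r \<circ> s) t) i)"
  proof
    fix i assume "i \<in> insert i0 I"
    then show "convergent (\<lambda>t. x ((r \<circ> s) t) i)"
    proof
      assume "i = i0" then show ?thesis using c0 by simp
    next
      assume "i \<in> I"
      then have "convergent ((\<lambda>t. x (r t) i) \<circ> s)" using r(2) s(1) by (intro convergent_subseq_convergent) auto
      then show ?thesis by (simp add: comp_def)
    qed
  qed
  ultimately show ?case by blast
qed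

lemma attain:
  assumes approx: "\<And>t. \<exists>L1 L2. cpu_map n1 m1 L1 \<and> cpu_map n2 m2 L2 \<and>
        M - inverse (real (Suc t)) \<le> obj n1 n2 m1 m2 d F P L1 L2"
    and upper: "\<And>L1 L2. cpu_map n1 m1 L1 \<Longrightarrow> cpu_map n2 m2 L2 \<Longrightarrow> obj n1 n2 m1 m2 d F P L1 L2 \<le> M"
    and Pc: "\<And>j. j < d \<Longrightarrow> P j \<in> carrier_mat (m1*m2) (m1*m2)"
  shows "\<exists>L1 L2. cpu_map n1 m1 L1 \<and> cpu_map n2 m2 L2 \<and> obj n1 n2 m1 m2 d F P L1 L2 = M"
proof -
  have "\<forall>t. \<exists>p. cpu_map n1 m1 (fst p) \<and> cpu_map n2 m2 (snd p) \<and>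
        M - inverse (real (Suc t)) \<le> obj n1 n2 m1 m2 d F P (fst p) (snd p)"
    using approx by fastforce
  then obtain f where f: "\<forall>t. cpu_map n1 m1 (fst (f t)) \<and> cpu_map n2 m2 (snd (f t)) \<and>
        M - inverse (real (Suc t)) \<le> obj n1 n2 m1 m2 d F P (fst (f t)) (snd (f t))"
    by (metis choice)
  define L1s where "L1s t = fst (f t)" for t
  define L2s where "L2s t = snd (f t)" for t
  have c1s: "\<And>t. cpu_map n1 m1 (L1s t)" and c2s: "\<And>t. cpu_map n2 m2 (L2s t)"
    and lows: "\<And>t. M - inverse (real (Suc t)) \<le> obj n1 n2 m1 m2 d F P (L1s t) (L2s t)"
    using f unfolding L1s_def L2s_def by auto
  define z where "z t a b i j w = (if w then (if a < n1 \<and> b < n1 \<and> i < m1 \<and> j < m1 then L1s t (munit n1 a b) $$ (i,j) else 0)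
     else (if a < n2 \<and> b < n2 \<and> i < m2 \<and> j < m2 then L2s t (munit n2 a b) $$ (i,j) else 0))" for t a b i j w
  have zb: "cmod (z t a b i j w) \<le> 2" for t a b i j w
    unfolding z_def using cpu_entry_bound[OF c1s] cpu_entry_bound[OF c2s] by auto
  define co where "co t q = (case q of ((a,b,i,j),w,ri) \<Rightarrow> if ri then Re (z t a b i j w) else Im (z t a b i j w))"
    for t and q :: "(nat \<times> nat \<times> nat \<times> nat) \<times> bool \<times> bool"
  have cob: "\<bar>co t q\<bar> \<le> 2" for t q
  proof -
    obtain a b i j w ri where q: "q = ((a,b,i,j),w,ri)" by (metis prod.collapse)
    show ?thesis unfolding co_def q using zb[of t a b i j w] abs_Re_le_cmod[of "z t a b i j w"]
      abs_Im_le_cmod[of "z t a b i j w"] by auto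
  qed
  define I where "I = ({..<n1+n2} \<times> {..<n1+n2} \<times> {..<m1+m2} \<times> {..<m1+m2}) \<times> (UNIV :: bool set) \<times> (UNIV :: bool set)"
  have fI: "finite I" unfolding I_def by simp
  obtain r where r: "strict_mono r" "\<forall>q\<in>I. convergent (\<lambda>t. co (r t) q)"
    using subseq_conv[of I co 2, OF fI cob] by blast
  define K where "K a b i j w = Complex (lim (\<lambda>t. co (r t) ((a,b,i,j),w,True))) (lim (\<lambda>t. co (r t) ((a,b,i,j),w,False)))"
    for a b i j w
  have convz: "(\<lambda>t. z (r t) a b i j w) \<longlonglongrightarrow> K a b i j w"
    if h: "a < n1+n2" "b < n1+n2" "i < m1+m2" "j < m1+m2" for a b i j w
  proof -
    have "((a,b,i,j),w,True) \<in> I" "((a,b,i,j),w,False) \<in> I" unfolding I_def using h by auto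
    then have "(\<lambda>t. co (r t) ((a,b,i,j),w,True)) \<longlonglongrightarrow> lim (\<lambda>t. co (r t) ((a,b,i,j),w,True))"
      "(\<lambda>t. co (r t) ((a,b,i,j),w,False)) \<longlonglongrightarrow> lim (\<lambda>t. co (r t) ((a,b,i,j),w,False))"
      using r(2) by (auto simp: convergent_LIMSEQ_iff)
    then have "(\<lambda>t. Complex (co (r t) ((a,b,i,j),w,True)) (co (r t) ((a,b,i,j),w,False))) \<longlonglongrightarrow> K a b i j w"
      unfolding K_def by (rule tendsto_Complex)
    moreover have "(\<lambda>t. Complex (co (r t) ((a,b,i,j),w,True)) (co (r t) ((a,b,i,j),w,False))) = (\<lambda>t. z (r t) a b i j w)"
      unfolding co_def by (simp add: complex_eq_iff)
    ultimately show ?thesis by simp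
  qed
  define K1 where "K1 a b i j = K a b i j True" for a b i j
  define K2 where "K2 a b i j = K a b i j False" for a b i j
  have conv1: "(\<lambda>t. L1s (r t) (munit n1 a b) $$ (i,j)) \<longlonglongrightarrow> K1 a b i j"
    if "a < n1" "b < n1" "i < m1" "j < m1" for a b i j
    using convz[of a b i j True] that unfolding K1_def z_def by simp
  have conv2: "(\<lambda>t. L2s (r t) (munit n2 a b) $$ (i,j)) \<longlonglongrightarrow> K2 a b i j"
    if "a < n2" "b < n2" "i < m2" "j < m2" for a b i j
    using convz[of a b i j False] that unfolding K2_def z_def by simp
  have cL1: "cpu_map n1 m1 (LL n1 m1 K1)" by (rule LL_cpu[OF c1s conv1])
  have cL2: "cpu_map n2 m2 (LL n2 m2 K2)" by (rule LL_cpu[OF c2s conv2])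
  have objL: "obj n1 n2 m1 m2 d F P (LL n1 m1 K1) (LL n2 m2 K2) = objc n1 n2 m1 m2 d F P K1 K2"
  proof -
    have "obj n1 n2 m1 m2 d F P (LL n1 m1 K1) (LL n2 m2 K2) = objc n1 n2 m1 m2 d F P
      (\<lambda>a b i j. LL n1 m1 K1 (munit n1 a b) $$ (i,j)) (\<lambda>a b i j. LL n2 m2 K2 (munit n2 a b) $$ (i,j))"
      by (rule obj_objc[OF LL_lin LL_lin Pc])
    also have "\<dots> = objc n1 n2 m1 m2 d F P K1 K2" by (rule objc_cong) (simp_all add: LL_munit)
    finally show ?thesis .
  qed
  have l1s: "\<And>t. lin_map n1 m1 (L1s t)" using c1s unfolding cpu_map_def cp_map_def by auto
  have l2s: "\<And>t. lin_map n2 m2 (L2s t)" using c2s unfolding cpu_map_def cp_map_def by auto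
  have lim1: "(\<lambda>t. obj n1 n2 m1 m2 d F P (L1s (r t)) (L2s (r t))) \<longlonglongrightarrow> objc n1 n2 m1 m2 d F P K1 K2"
  proof -
    have eq: "obj n1 n2 m1 m2 d F P (L1s (r t)) (L2s (r t)) = objc n1 n2 m1 m2 d F P
      (\<lambda>a b i j. L1s (r t) (munit n1 a b) $$ (i,j)) (\<lambda>a b i j. L2s (r t) (munit n2 a b) $$ (i,j))" for t
      by (rule obj_objc[OF l1s l2s Pc])
    show ?thesis unfolding eq
      by (rule objc_tendsto[where K1s = "\<lambda>t a b i j. L1s (r t) (munit n1 a b) $$ (i,j)"
          and K2s = "\<lambda>t a b i j. L2s (r t) (munit n2 a b) $$ (i,j)"]) (auto intro: conv1 conv2)
  qed
  have lim2: "(\<lambda>t. obj n1 n2 m1 m2 d F P (L1s (r t)) (L2s (r t))) \<longlonglongrightarrow> M"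
  proof (rule tendsto_sandwich[where f = "\<lambda>t. M - inverse (real (Suc t))" and h = "\<lambda>t. M"])
    show "\<forall>\<^sub>F t in sequentially. M - inverse (real (Suc t)) \<le> obj n1 n2 m1 m2 d F P (L1s (r t)) (L2s (r t))"
    proof (rule always_eventually, rule allI)
      fix t
      have "t \<le> r t" by (rule seq_suble[OF r(1)])
      then have "inverse (real (Suc (r t))) \<le> inverse (real (Suc t))" by (intro le_imp_inverse_le) auto
      then show "M - inverse (real (Suc t)) \<le> obj n1 n2 m1 m2 d F P (L1s (r t)) (L2s (r t))"
        using lows[of "r t"] by linarith
    qed
    show "\<forall>\<^sub>F t in sequentially. obj n1 n2 m1 m2 d F P (L1s (r t)) (L2s (r t)) \<le> M"
      using upper[OF c1s c2s] by simp
    show "(\<lambda>t. M - inverse (real (Suc t))) \<longlonglongrightarrow> M"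
      using tendsto_diff[OF tendsto_const LIMSEQ_inverse_real_of_nat, of M] by simp
    show "(\<lambda>t. M) \<longlonglongrightarrow> M" by simp
  qed
  have "objc n1 n2 m1 m2 d F P K1 K2 = M" using LIMSEQ_unique[OF lim1 lim2] .
  then show ?thesis using cL1 cL2 objL by metis
qed



theorem mainTheorem5:
  fixes n1 n2 m1 m2 d :: nat and F P :: "nat \<Rightarrow> complex mat"
  assumes "0 < n1" "0 < n2" "0 < m1" "0 < m2"
    and "projective_measurement (m1 * m2) d P"
    and "povm (n1 * n2) d F"
  shows "Qval n1 n2 m1 m2 d F P \<le> 1 \<and>
    (Qval n1 n2 m1 m2 d F P = 1 \<longrightarrow>
      (\<exists>L1 L2. cpu_map n1 m1 L1 \<and> cpu_map n2 m2 L2 \<and>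
         (\<forall>j<d. tensor_map n1 n2 m1 m2 L1 L2 (F j) = P j)))"
proof -
  define M where "M = real (m1 * m2)"
  define Sset where "Sset = {Re (\<Sum>j<d. mtrace (tensor_map n1 n2 m1 m2 L1 L2 (F j) * P j)) | L1 L2.
            cpu_map n1 m1 L1 \<and> cpu_map n2 m2 L2}"
  have Sset': "Sset = {obj n1 n2 m1 m2 d F P L1 L2 | L1 L2. cpu_map n1 m1 L1 \<and> cpu_map n2 m2 L2}"
    unfolding Sset_def obj_def ..
  have Qv: "Qval n1 n2 m1 m2 d F P = 1 / (real m1 * real m2) * Sup Sset"
    unfolding Qval_def Sset_def ..
  have ne: "Sset \<noteq> {}" unfolding Sset' using L0_cpu[OF assms(1,3)] L0_cpu[OF assms(2,4)] by blast
  have up: "obj n1 n2 m1 m2 d F P L1 L2 \<le> M" if "cpu_map n1 m1 L1" "cpu_map n2 m2 L2" for L1 L2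
    unfolding M_def using obj_le[OF that assms(5,6)] .
  have ub: "\<And>s. s \<in> Sset \<Longrightarrow> s \<le> M" unfolding Sset' using up by blast
  have supM: "Sup Sset \<le> M" by (rule cSup_least[OF ne ub])
  have pos: "0 < real m1 * real m2" using assms by simp
  have Mm: "M = real m1 * real m2" unfolding M_def by simp
  have le1: "Qval n1 n2 m1 m2 d F P \<le> 1" unfolding Qv using supM pos Mm by (simp add: field_simps)
  moreover have "Qval n1 n2 m1 m2 d F P = 1 \<longrightarrow>
      (\<exists>L1 L2. cpu_map n1 m1 L1 \<and> cpu_map n2 m2 L2 \<and>
         (\<forall>j<d. tensor_map n1 n2 m1 m2 L1 L2 (F j) = P j))"
  proof
    assume "Qval n1 n2 m1 m2 d F P = 1"
    then have sM: "Sup Sset = M" unfolding Qv using pos Mm by (simp add: field_simps)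
    have approx: "\<exists>L1 L2. cpu_map n1 m1 L1 \<and> cpu_map n2 m2 L2 \<and>
        M - inverse (real (Suc t)) \<le> obj n1 n2 m1 m2 d F P L1 L2" for t
    proof -
      have "M - inverse (real (Suc t)) < Sup Sset" using sM by simp
      then obtain s where s: "s \<in> Sset" "M - inverse (real (Suc t)) < s" using less_cSupD[OF ne] by blast
      then show ?thesis unfolding Sset' by force
    qed
    have Pc: "\<And>j. j < d \<Longrightarrow> P j \<in> carrier_mat (m1*m2) (m1*m2)" using proj_facts(2)[OF assms(5)] by auto
    obtain L1 L2 where L: "cpu_map n1 m1 L1" "cpu_map n2 m2 L2" "obj n1 n2 m1 m2 d F P L1 L2 = M"
      using attain[OF approx up Pc] by blast
    show "\<exists>L1 L2. cpu_map n1 m1 L1 \<and> cpu_map n2 m2 L2 \<and>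
         (\<forall>j<d. tensor_map n1 n2 m1 m2 L1 L2 (F j) = P j)"
      using L obj_eq[OF L(1,2) assms(5,6)] unfolding M_def by blast
  qed
  ultimately show ?thesis by blast
qed


end
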